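(* Let $\alpha\in(0,1)$ and let $a:[0,+\infty)\to\mathbb{R}$ be continuous. Assume that there exists $T>0$ such that $\int_{T}^{+\infty}s^{1+\alpha}|a(s)|\,ds<+\infty$ and \[ \frac{\max\{1,T^{\alpha}\}}{\Gamma(1+\alpha)}\left[\int_{0}^{T}|a(s)|\,ds+\int_{T}^{+\infty}s^{\alpha}|a(s)|\,ds\right]=k<1 . \] Then, for any given real numbers $c,b$ with $c^{2}+b^{2}>0$, the fractional differential equation \[ {}_{0}D_{t}^{\alpha}(x')(t)+a(t)x(t)=0,\qquad t>0, \] has a solution $x\in C([0,+\infty),\mathbb{R})$ with the asymptotic formula \[ x(t)=c+bt^{\alpha}+O(t^{\alpha-1})=c+bt^{\alpha}+o(1)\quad\text{as }t\to+\infty . \]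
   Context: $\Gamma$ is Euler's Gamma function. For a function $f\in C((0,+\infty),\mathbb{R})$ with $\lim_{t\searrow 0}t^{1-\alpha}f(t)\in\mathbb{R}$, the Riemann–Liouville derivative of order $\alpha\in(0,1)$ is $({}_{0}D_{t}^{\alpha}f)(t)=\frac{1}{\Gamma(1-\alpha)}\frac{d}{dt}\left[\int_{0}^{t}\frac{f(s)}{(t-s)^{\alpha}}\,ds\right]$, $t>0$. The operator in the equation is ${}_{0}D_{t}^{\alpha}\circ\frac{d}{dt}$, i.e. the Riemann–Liouville derivative of $x'$. (In the paper the constants $c,b$ are denoted $a,b$; they are renamed here to avoid a clash with the coefficient $a(t)$.) *)

theory Defs
  imports "HOL-Analysis.Analysis" "HOL-Library.Landau_Symbols"
begin

definition RL_integral_part :: "real \<Rightarrow> (real \<Rightarrow> real) \<Rightarrow> real \<Rightarrow> real" where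
  "RL_integral_part \<alpha> f \<tau> = integral {0..\<tau>} (\<lambda>s. f s / (\<tau> - s) powr \<alpha>)"

definition RL_deriv :: "real \<Rightarrow> (real \<Rightarrow> real) \<Rightarrow> real \<Rightarrow> real" where
  "RL_deriv \<alpha> f t = deriv (RL_integral_part \<alpha> f) t / Gamma (1 - \<alpha>)"

definition RL_admissible :: "real \<Rightarrow> (real \<Rightarrow> real) \<Rightarrow> bool" where
  "RL_admissible \<alpha> f \<longleftrightarrow>
     continuous_on {0<..} f \<and>
     (\<exists>L. ((\<lambda>t. t powr (1 - \<alpha>) * f t) \<longlongrightarrow> L) (at_right 0)) \<and>
     (\<forall>t>0. (\<lambda>s. f s / (t - s) powr \<alpha>) integrable_on {0..t} \<and>
             RL_integral_part \<alpha> f differentiable (at t))"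

definition is_solution :: "real \<Rightarrow> (real \<Rightarrow> real) \<Rightarrow> (real \<Rightarrow> real) \<Rightarrow> bool" where
  "is_solution \<alpha> a x \<longleftrightarrow>
     continuous_on {0..} x \<and>
     (\<forall>t>0. x differentiable (at t)) \<and>
     RL_admissible \<alpha> (deriv x) \<and>
     (\<forall>t>0. RL_deriv \<alpha> (deriv x) t + a t * x t = 0)"

end

theory Submission
  imports Defs
begin


lemma abs_int_lborel:
  fixes f :: "real \<Rightarrow> real"
  assumes "f \<in> borel_measurable borel" "S \<in> sets borel" "f absolutely_integrable_on S"
  shows "set_integrable lborel S f"
  using assms unfolding set_integrable_def
  by (subst (asm) integrable_completion) auto

lemma beta_scaled:
  fixes p q s t :: real
  assumes p: "0<p" and q: "0<q" and st: "s<t"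
  shows "((\<lambda>u. (t-u) powr (p-1) * (u-s) powr (q-1)) has_integral Beta q p * (t-s) powr (p+q-1)) {s..t}"
proof -
  define r where "r = t - s"
  have r: "r > 0" using st unfolding r_def by linarith
  have B: "((\<lambda>w. w powr (q-1) * (1-w) powr (p-1)) has_integral Beta q p) (cbox 0 1)"
    using has_integral_Beta_real[OF q p] by simp
  have "((\<lambda>u. (\<lambda>w. w powr (q-1) * (1-w) powr (p-1)) ((1/r) *\<^sub>R u + (-s/r))) has_integral
      (Beta q p /\<^sub>R (1/r) ^ DIM(real))) (cbox ((0 - (-s/r)) /\<^sub>R (1/r)) ((1 - (-s/r)) /\<^sub>R (1/r)))"
    by (rule has_integral_affinity'[OF B]) (use r in auto)
  also have "cbox ((0 - (-s/r)) /\<^sub>R (1/r)) ((1 - (-s/r)) /\<^sub>R (1/r)) = {s..t}"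
    using r by (simp add: r_def field_simps)
  finally have I: "((\<lambda>u. ((u-s)/r) powr (q-1) * (1-(u-s)/r) powr (p-1)) has_integral r * Beta q p) {s..t}"
    using r by (simp add: field_simps)
  have I2: "((\<lambda>u. r powr (p+q-2) * (((u-s)/r) powr (q-1) * (1-(u-s)/r) powr (p-1))) has_integral
      r powr (p+q-2) * (r * Beta q p)) {s..t}"
    by (rule has_integral_mult_right[OF I])
  have eq1: "r powr (p+q-2) * (r * Beta q p) = Beta q p * (t-s) powr (p+q-1)"
  proof -
    have "r powr (p+q-1) = r powr (p+q-2) * r powr 1" using powr_add[of r "p+q-2" 1] by simp
    thus ?thesis using r by (simp add: r_def)
  qed
  have eq2: "r powr (p+q-2) * (((u-s)/r) powr (q-1) * (1-(u-s)/r) powr (p-1)) = (t-u) powr (p-1) * (u-s) powr (q-1)"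
    if "u \<in> {s..t}" for u
  proof -
    have "1-(u-s)/r = (t-u)/r" using r by (simp add: r_def field_simps)
    moreover have "((u-s)/r) powr (q-1) = (u-s) powr (q-1) / r powr (q-1)"
      using that r by (simp add: powr_divide)
    moreover have "((t-u)/r) powr (p-1) = (t-u) powr (p-1) / r powr (p-1)"
      using that r by (simp add: powr_divide)
    moreover have "r powr (p+q-2) = r powr (q-1) * r powr (p-1)" using powr_add[of r "q-1" "p-1"] by (simp add: algebra_simps)
    ultimately show ?thesis using r by (simp add: field_simps)
  qed
  show ?thesis
    using I2 unfolding eq1 by (rule has_integral_eq[rotated]) (use eq2 in auto)
qed




lemma beta_lborel:
  fixes p q s t :: real
  assumes p: "0<p" and q: "0<q" and st: "s<t"
  shows "set_integrable lborel {s..t} (\<lambda>u. (t-u) powr (p-1) * (u-s) powr (q-1))"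
    "(LINT u:{s..t}|lborel. (t-u) powr (p-1) * (u-s) powr (q-1)) = Beta q p * (t-s) powr (p+q-1)"
proof -
  have hi: "((\<lambda>u. (t-u) powr (p-1) * (u-s) powr (q-1)) has_integral Beta q p * (t-s) powr (p+q-1)) {s..t}"
    by (rule beta_scaled[OF p q st])
  have ai: "(\<lambda>u. (t-u) powr (p-1) * (u-s) powr (q-1)) absolutely_integrable_on {s..t}"
    using hi by (subst absolutely_integrable_on_iff_nonneg) (auto simp: integrable_on_def)
  show si: "set_integrable lborel {s..t} (\<lambda>u. (t-u) powr (p-1) * (u-s) powr (q-1))"
    by (rule abs_int_lborel[OF _ _ ai]) auto
  show "(LINT u:{s..t}|lborel. (t-u) powr (p-1) * (u-s) powr (q-1)) = Beta q p * (t-s) powr (p+q-1)"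
    using set_borel_integral_eq_integral(2)[OF si] integral_unique[OF hi] by simp
qed

lemma kernel_has_integral:
  fixes q u :: real
  assumes q: "0<q" and u: "0 \<le> u"
  shows "((\<lambda>s. (u-s) powr (q-1)) has_integral u powr q / q) {0..u}"
proof -
  have "((\<lambda>x. x powr (q-1)) has_integral (u powr (q-1+1) / (q-1+1))) {0..u}"
    by (rule has_integral_powr_from_0) (use q u in auto)
  hence "((\<lambda>x. x powr (q-1)) has_integral u powr q / q) {0..u}" by simp
  hence "((\<lambda>x. (-x) powr (q-1)) has_integral u powr q / q) {-u..-0}"
    by (subst has_integral_reflect_real) 
  from has_integral_shift_real_ivl[OF this, of "-u"]
  show ?thesis by simp
qed

lemma kernel_lborel:
  fixes q u :: real
  assumes q: "0<q" and u: "0 \<le> u"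
  shows "set_integrable lborel {0..u} (\<lambda>s. (u-s) powr (q-1))"
    "(LINT s:{0..u}|lborel. (u-s) powr (q-1)) = u powr q / q"
proof -
  note hi = kernel_has_integral[OF q u]
  have ai: "(\<lambda>s. (u-s) powr (q-1)) absolutely_integrable_on {0..u}"
    using hi by (subst absolutely_integrable_on_iff_nonneg) (auto simp: integrable_on_def)
  show si: "set_integrable lborel {0..u} (\<lambda>s. (u-s) powr (q-1))"
    by (rule abs_int_lborel[OF _ _ ai]) auto
  show "(LINT s:{0..u}|lborel. (u-s) powr (q-1)) = u powr q / q"
    using set_borel_integral_eq_integral(2)[OF si] integral_unique[OF hi] by simp
qed

lemma kernel_h_lborel:
  fixes q u M :: real and h :: "real \<Rightarrow> real"
  assumes q: "0<q" and u: "0 \<le> u" and h: "continuous_on UNIV h"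
    and M: "\<And>s. s \<in> {0..u} \<Longrightarrow> \<bar>h s\<bar> \<le> M"
  shows "set_integrable lborel {0..u} (\<lambda>s. (u-s) powr (q-1) * h s)"
proof -
  have [measurable]: "h \<in> borel_measurable borel" by (rule borel_measurable_continuous_onI[OF h])
  have "set_integrable lborel {0..u} (\<lambda>s. M * (u-s) powr (q-1))"
    using kernel_lborel(1)[OF q u] by (rule set_integrable_mult_right)
  thus ?thesis
  proof (rule set_integrable_bound)
    show "set_borel_measurable lborel {0..u} (\<lambda>s. (u - s) powr (q - 1) * h s)"
      unfolding set_borel_measurable_def by measurable
    show "AE x in lborel. x \<in> {0..u} \<longrightarrow> norm ((u - x) powr (q - 1) * h x) \<le> norm (M * (u - x) powr (q - 1))"
    proof (rule AE_I2, rule impI)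
      fix x assume x: "x \<in> {0..u}"
      have "\<bar>(u - x) powr (q - 1) * h x\<bar> = (u-x) powr (q-1) * \<bar>h x\<bar>" by (simp add: abs_mult)
      also have "\<dots> \<le> (u-x) powr (q-1) * M" by (rule mult_left_mono[OF M[OF x]]) simp
      also have "\<dots> \<le> \<bar>M * (u - x) powr (q - 1)\<bar>" by (metis abs_ge_self mult.commute)
      finally show "norm ((u - x) powr (q - 1) * h x) \<le> norm (M * (u - x) powr (q - 1))" by simp
    qed
  qed
qed




lemma Beta_nonneg:
  fixes a b :: real
  assumes "0 < a" "0 < b" shows "0 \<le> Beta a b"
  by (rule has_integral_nonneg[OF has_integral_Beta_real[OF assms]]) auto

lemma conv_assoc:
  fixes p q t :: real and h :: "real \<Rightarrow> real"
  assumes p: "0<p" and q: "0<q" and pq: "1 \<le> p+q" and t: "0<t" and h: "continuous_on UNIV h"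
  shows "(\<lambda>u. (t-u) powr (p-1) * integral {0..u} (\<lambda>s. (u-s) powr (q-1) * h s)) integrable_on {0..t}"
    "integral {0..t} (\<lambda>u. (t-u) powr (p-1) * integral {0..u} (\<lambda>s. (u-s) powr (q-1) * h s))
      = Beta q p * integral {0..t} (\<lambda>s. (t-s) powr (p+q-1) * h s)"
proof -
  have hm[measurable]: "h \<in> borel_measurable borel" by (rule borel_measurable_continuous_onI[OF h])
  have "bounded (h ` {0..t})"
    by (intro compact_imp_bounded compact_continuous_image continuous_on_subset[OF h]) auto
  then obtain M where M0: "\<forall>x\<in>h ` {0..t}. norm x \<le> M" using bounded_iff by blast
  have M: "\<And>s. s \<in> {0..t} \<Longrightarrow> \<bar>h s\<bar> \<le> M" using M0 by auto
  define I where "I = (\<lambda>u. integral {0..u} (\<lambda>s. (u-s) powr (q-1) * h s))"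
  define F where "F = (\<lambda>(s::real,u::real). if 0 \<le> s \<and> s \<le> u \<and> u \<le> t then (t-u) powr (p-1) * (u-s) powr (q-1) * h s else 0)"
  have Fm[measurable]: "F \<in> borel_measurable (lborel \<Otimes>\<^sub>M lborel)" unfolding F_def by measurable
  define G where "G = (\<lambda>s. if 0 \<le> s \<and> s \<le> t then Beta q p * (t-s) powr (p+q-1) * h s else 0)"
  have Gm[measurable]: "G \<in> borel_measurable lborel" unfolding G_def by measurable
  have inner_s: "integrable lborel (\<lambda>u. F (s,u)) \<and> (LINT u|lborel. F (s,u)) = G s
      \<and> (LINT u|lborel. norm (F (s,u))) = \<bar>G s\<bar>" for s
  proof (cases "0 \<le> s \<and> s < t")
    case True
    note bl = beta_lborel[OF p q, of s t]
    have eq: "(\<lambda>u. F (s,u)) = (\<lambda>u. h s * (indicator {s..t} u *\<^sub>R ((t-u) powr (p-1) * (u-s) powr (q-1))))"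
      using True by (auto simp: F_def indicator_def fun_eq_iff)
    have eqn: "(\<lambda>u. norm (F (s,u))) = (\<lambda>u. \<bar>h s\<bar> * (indicator {s..t} u *\<^sub>R ((t-u) powr (p-1) * (u-s) powr (q-1))))"
      using True by (auto simp: F_def indicator_def fun_eq_iff abs_mult)
    have i1: "integrable lborel (\<lambda>u. indicator {s..t} u *\<^sub>R ((t-u) powr (p-1) * (u-s) powr (q-1)))"
      using bl(1) True unfolding set_integrable_def by simp
    have v1: "(LINT u|lborel. indicator {s..t} u *\<^sub>R ((t-u) powr (p-1) * (u-s) powr (q-1))) = Beta q p * (t-s) powr (p+q-1)"
      using bl(2) True unfolding set_lebesgue_integral_def by simp
    have Gs: "G s = h s * (Beta q p * (t-s) powr (p+q-1))" using True by (simp add: G_def)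
    have "\<bar>G s\<bar> = \<bar>h s\<bar> * (Beta q p * (t-s) powr (p+q-1))"
    proof -
      have "Beta q p * (t-s) powr (p+q-1) \<ge> 0"
        using Beta_nonneg[OF q p] by simp
      thus ?thesis using Gs Beta_nonneg[OF q p] by (simp add: abs_mult)
    qed
    thus ?thesis unfolding eq eqn using i1 v1 Gs by simp
  next
    case False
    have F0: "F (s,u) = 0" for u
    proof (cases "0 \<le> s \<and> s \<le> u \<and> u \<le> t")
      case True
      with False have "u = s" by auto
      thus ?thesis by (simp add: F_def)
    qed (auto simp: F_def)
    hence eq: "(\<lambda>u. F (s,u)) = (\<lambda>u. 0)" by auto
    have "G s = 0" using False by (auto simp: G_def)
    thus ?thesis using F0 by simp
  qed
  have Gi: "integrable lborel G"
  proof (rule Bochner_Integration.integrable_bound)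
    have "set_integrable lborel {0..t} (\<lambda>s. \<bar>Beta q p\<bar> * t powr (p+q-1) * M)"
      by (rule borel_integrable_atLeastAtMost') simp
    thus "integrable lborel (\<lambda>s. indicator {0..t} s *\<^sub>R (\<bar>Beta q p\<bar> * t powr (p+q-1) * M))"
      unfolding set_integrable_def .
    show "AE x in lborel. norm (G x) \<le> norm (indicator {0..t} x *\<^sub>R (\<bar>Beta q p\<bar> * t powr (p+q-1) * M))"
    proof (rule AE_I2)
      fix x
      show "norm (G x) \<le> norm (indicator {0..t} x *\<^sub>R (\<bar>Beta q p\<bar> * t powr (p+q-1) * M))"
      proof (cases "0 \<le> x \<and> x \<le> t")
        case True
        have M0: "0 \<le> M" using M[of x] True by auto
        have "(t-x) powr (p+q-1) \<le> t powr (p+q-1)" using True pq by (intro powr_mono2) auto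
        hence "\<bar>Beta q p\<bar> * (t-x) powr (p+q-1) * \<bar>h x\<bar> \<le> \<bar>Beta q p\<bar> * t powr (p+q-1) * M"
          using M[of x] True M0 by (intro mult_mono) auto
        thus ?thesis using True M0 by (simp add: G_def abs_mult)
      qed (auto simp: G_def)
    qed
  qed fact
  have Fi: "integrable (lborel \<Otimes>\<^sub>M lborel) F"
  proof (rule lborel_pair.Fubini_integrable[OF Fm])
    have "(\<lambda>s. LINT u|lborel. norm (F (s,u))) = (\<lambda>s. \<bar>G s\<bar>)" using inner_s by auto
    thus "integrable lborel (\<lambda>s. LINT u|lborel. norm (F (s,u)))" using Gi by simp
    show "AE x in lborel. integrable lborel (\<lambda>y. F (x, y))" using inner_s by auto
  qed
  have Fi': "integrable (lborel \<Otimes>\<^sub>M lborel) (\<lambda>(s,u). F (s,u))" using Fi by simp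
  have inner_u: "(LINT s|lborel. F (s,u)) = indicator {0..t} u * ((t-u) powr (p-1) * I u)" for u
  proof -
    consider "0 < u \<and> u \<le> t" | "u = 0" | "u < 0 \<or> u > t" by linarith
    thus ?thesis
    proof cases
      case 1
      have si: "set_integrable lborel {0..u} (\<lambda>s. (u-s) powr (q-1) * h s)"
        by (rule kernel_h_lborel[OF q _ h, of u M]) (use 1 M in auto)
      have eq: "(\<lambda>s. F (s,u)) = (\<lambda>s. (t-u) powr (p-1) * (indicator {0..u} s *\<^sub>R ((u-s) powr (q-1) * h s)))"
        using 1 by (auto simp: F_def indicator_def fun_eq_iff)
      have "(LINT s|lborel. F (s,u)) = (t-u) powr (p-1) * (LINT s:{0..u}|lborel. (u-s) powr (q-1) * h s)"
        unfolding eq set_lebesgue_integral_def by simp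
      also have "\<dots> = (t-u) powr (p-1) * I u"
        using set_borel_integral_eq_integral(2)[OF si] by (simp add: I_def)
      finally show ?thesis using 1 by simp
    next
      case 2
      have eq: "(\<lambda>s. F (s,u)) = (\<lambda>s. 0)" using 2 by (auto simp: F_def fun_eq_iff)
      have "I u = 0" using 2 by (simp add: I_def)
      thus ?thesis unfolding eq by simp
    next
      case 3
      have eq: "(\<lambda>s. F (s,u)) = (\<lambda>s. 0)" using 3 by (auto simp: F_def fun_eq_iff)
      thus ?thesis using 3 by (auto simp: indicator_def)
    qed
  qed
  have intu: "integrable lborel (\<lambda>u. LINT s|lborel. F (s,u))"
    using lborel_pair.integrable_snd[OF Fi'] by simp
  have sl: "set_integrable lborel {0..t} (\<lambda>u. (t-u) powr (p-1) * I u)"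
    using intu unfolding set_integrable_def inner_u by (simp add: mult_ac)
  have fub: "(LINT u|lborel. LINT s|lborel. F (s,u)) = (LINT s|lborel. LINT u|lborel. F (s,u))"
    using lborel_pair.Fubini_integral[OF Fi'] by simp
  have lhs: "(LINT u|lborel. LINT s|lborel. F (s,u)) = integral {0..t} (\<lambda>u. (t-u) powr (p-1) * I u)"
    using set_borel_integral_eq_integral(2)[OF sl] unfolding inner_u set_lebesgue_integral_def
    by (simp add: mult_ac)
  have sk: "set_integrable lborel {0..t} (\<lambda>s. (t-s) powr ((p+q)-1) * h s)"
    by (rule kernel_h_lborel[OF _ _ h, of "p+q" t M]) (use p q t M in auto)
  have "(LINT s|lborel. LINT u|lborel. F (s,u)) = (LINT s|lborel. G s)" using inner_s by simp
  also have "\<dots> = (LINT s|lborel. Beta q p * (indicator {0..t} s *\<^sub>R ((t-s) powr (p+q-1) * h s)))"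
    by (rule Bochner_Integration.integral_cong) (auto simp: G_def indicator_def)
  also have "\<dots> = Beta q p * (LINT s:{0..t}|lborel. (t-s) powr (p+q-1) * h s)"
    unfolding set_lebesgue_integral_def by simp
  also have "\<dots> = Beta q p * integral {0..t} (\<lambda>s. (t-s) powr (p+q-1) * h s)"
    using set_borel_integral_eq_integral(2)[OF sk] by simp
  finally have rhs: "(LINT s|lborel. LINT u|lborel. F (s,u)) = Beta q p * integral {0..t} (\<lambda>s. (t-s) powr (p+q-1) * h s)" .
  show "(\<lambda>u. (t-u) powr (p-1) * integral {0..u} (\<lambda>s. (u-s) powr (q-1) * h s)) integrable_on {0..t}"
    using set_borel_integral_eq_integral(1)[OF sl] unfolding I_def .
  show "integral {0..t} (\<lambda>u. (t-u) powr (p-1) * integral {0..u} (\<lambda>s. (u-s) powr (q-1) * h s))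
      = Beta q p * integral {0..t} (\<lambda>s. (t-s) powr (p+q-1) * h s)"
    using lhs fub rhs unfolding I_def by simp
qed




definition Jf :: "real \<Rightarrow> (real \<Rightarrow> real) \<Rightarrow> real \<Rightarrow> real" where
  "Jf q g u = integral {0..u} (\<lambda>s. (u-s) powr (q-1) * g s)"

lemma cont_bounded_on:
  fixes g :: "real \<Rightarrow> real"
  assumes "continuous_on UNIV g"
  obtains M where "\<And>s. s \<in> {a..b} \<Longrightarrow> \<bar>g s\<bar> \<le> M"
proof -
  have "bounded (g ` {a..b})"
    by (intro compact_imp_bounded compact_continuous_image continuous_on_subset[OF assms]) auto
  then obtain M where M0: "\<forall>x\<in>g ` {a..b}. norm x \<le> M" using bounded_iff by blast
  show ?thesis by (rule that[of M]) (use M0 in auto)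
qed

lemma kernel_int:
  fixes q u :: real and g :: "real \<Rightarrow> real"
  assumes q: "0<q" and u: "0 \<le> u" and g: "continuous_on UNIV g"
  shows "(\<lambda>s. (u-s) powr (q-1) * g s) integrable_on {0..u}"
proof -
  obtain M where M: "\<And>s. s \<in> {0..u} \<Longrightarrow> \<bar>g s\<bar> \<le> M" using cont_bounded_on[OF g] by blast
  show ?thesis using set_borel_integral_eq_integral(1)[OF kernel_h_lborel[OF q u g M]] .
qed

lemma J_bound:
  fixes q u M :: real and g :: "real \<Rightarrow> real"
  assumes q: "0<q" and u: "0 \<le> u" and g: "continuous_on UNIV g"
    and M: "\<And>s. s \<in> {0..u} \<Longrightarrow> \<bar>g s\<bar> \<le> M"
  shows "\<bar>Jf q g u\<bar> \<le> M * (u powr q / q)"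
proof -
  have hi: "((\<lambda>s. M * (u-s) powr (q-1)) has_integral M * (u powr q / q)) {0..u}"
    by (rule has_integral_mult_right[OF kernel_has_integral[OF q u]])
  have "norm (integral {0..u} (\<lambda>s. (u-s) powr (q-1) * g s)) \<le> integral {0..u} (\<lambda>s. M * (u-s) powr (q-1))"
  proof (rule integral_norm_bound_integral)
    show "(\<lambda>s. (u-s) powr (q-1) * g s) integrable_on {0..u}" by (rule kernel_int[OF q u g])
    show "(\<lambda>s. M * (u-s) powr (q-1)) integrable_on {0..u}" using hi by (auto simp: integrable_on_def)
    fix x assume x: "x \<in> {0..u}"
    have "\<bar>(u-x) powr (q-1) * g x\<bar> = (u-x) powr (q-1) * \<bar>g x\<bar>" by (simp add: abs_mult)
    also have "\<dots> \<le> (u-x) powr (q-1) * M" by (rule mult_left_mono[OF M[OF x]]) simp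
    finally show "norm ((u-x) powr (q-1) * g x) \<le> M * (u-x) powr (q-1)" by (simp add: mult.commute)
  qed
  thus ?thesis using integral_unique[OF hi] by (simp add: Jf_def)
qed

lemma J_scale:
  fixes q u :: real and g :: "real \<Rightarrow> real"
  assumes q: "0<q" and u: "0 < u" and g: "continuous_on UNIV g"
  shows "Jf q g u = u powr q * integral {0..1} (\<lambda>w. (1-w) powr (q-1) * g (u*w))"
proof -
  have hi: "((\<lambda>s. (u-s) powr (q-1) * g s) has_integral Jf q g u) (cbox 0 u)"
    using kernel_int[OF q _ g, of u] u by (simp add: Jf_def has_integral_integral)
  have "((\<lambda>w. (\<lambda>s. (u-s) powr (q-1) * g s) (u *\<^sub>R w + 0)) has_integral (Jf q g u /\<^sub>R u ^ DIM(real)))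
      (cbox ((0 - 0) /\<^sub>R u) ((u - 0) /\<^sub>R u))"
    by (rule has_integral_affinity'[OF hi u])
  hence hi2: "((\<lambda>w. (u - u*w) powr (q-1) * g (u*w)) has_integral Jf q g u / u) {0..1}"
    using u by (simp add: divide_inverse mult.commute)
  have eq: "(u - u*w) powr (q-1) * g (u*w) = u powr (q-1) * ((1-w) powr (q-1) * g (u*w))"
    if "w \<in> {0..1}" for w
  proof -
    have "u - u*w = u * (1-w)" by (simp add: algebra_simps)
    thus ?thesis using that u by (simp add: powr_mult)
  qed
  have hi3: "((\<lambda>w. u powr (q-1) * ((1-w) powr (q-1) * g (u*w))) has_integral Jf q g u / u) {0..1}"
    using hi2 by (rule has_integral_eq[rotated]) (use eq in auto)
  have gcu: "continuous_on UNIV (\<lambda>w. g (u*w))"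
    by (auto intro!: continuous_on_compose2[OF g] continuous_intros)
  have i4: "(\<lambda>w. (1-w) powr (q-1) * g (u*w)) integrable_on {0..1}"
    using kernel_int[OF q _ gcu, of 1] by simp
  have "u powr (q-1) * integral {0..1} (\<lambda>w. (1-w) powr (q-1) * g (u*w)) = Jf q g u / u"
    using integral_unique[OF hi3] integral_mult_right by metis
  hence "u * (u powr (q-1) * integral {0..1} (\<lambda>w. (1-w) powr (q-1) * g (u*w))) = Jf q g u"
    using u by (simp add: field_simps)
  moreover have "u * u powr (q-1) = u powr q" using u powr_add[of u 1 "q-1"] by simp
  ultimately show ?thesis by (simp add: mult.assoc[symmetric])
qed

lemma L_cont:
  fixes q :: real and g :: "real \<Rightarrow> real"
  assumes q: "0<q" and g: "continuous_on UNIV g"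
  shows "continuous_on UNIV (\<lambda>u. integral {0..1} (\<lambda>w. (1-w) powr (q-1) * g (u*w)))"
proof (rule continuous_on_sequentiallyI)
  fix x :: "nat \<Rightarrow> real" and a assume x: "x \<longlonglongrightarrow> a"
  obtain B where B: "\<And>n. \<bar>x n\<bar> \<le> B"
    using convergent_imp_bounded[OF x] by (auto simp: bounded_iff)
  obtain M where M: "\<And>s. s \<in> {-B..B} \<Longrightarrow> \<bar>g s\<bar> \<le> M" using cont_bounded_on[OF g] by blast
  have gc: "continuous_on UNIV (\<lambda>w. g (c*w))" for c
    by (auto intro!: continuous_on_compose2[OF g] continuous_intros)
  have hi: "((\<lambda>w. M * (1-w) powr (q-1)) has_integral M * (1 powr q / q)) {0..1}"
    by (rule has_integral_mult_right[OF kernel_has_integral[OF q]]) simp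
  show "(\<lambda>n. integral {0..1} (\<lambda>w. (1-w) powr (q-1) * g (x n*w))) \<longlonglongrightarrow>
        integral {0..1} (\<lambda>w. (1-w) powr (q-1) * g (a*w))"
  proof (rule dominated_convergence(2))
    show "(\<lambda>w. (1-w) powr (q-1) * g (x k*w)) integrable_on {0..1}" for k
      using kernel_int[OF q _ gc, of 1] by simp
    show "(\<lambda>w. M * (1-w) powr (q-1)) integrable_on {0..1}" using hi by (auto simp: integrable_on_def)
    fix k and w :: real assume w: "w \<in> {0..1}"
    have "\<bar>x k * w\<bar> \<le> B" using B[of k] w by (auto simp: abs_mult intro: order_trans[OF mult_right_le_one_le])
    hence "\<bar>g (x k * w)\<bar> \<le> M" using M[of "x k * w"] by (simp add: abs_le_iff)
    hence "\<bar>(1-w) powr (q-1) * g (x k*w)\<bar> \<le> (1-w) powr (q-1) * M"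
      by (simp add: abs_mult mult_left_mono)
    thus "norm ((1-w) powr (q-1) * g (x k*w)) \<le> M * (1-w) powr (q-1)" by (simp add: mult.commute)
  next
    fix w :: real assume w: "w \<in> {0..1}"
    have "(\<lambda>k. x k * w) \<longlonglongrightarrow> a * w" by (intro tendsto_intros x)
    hence "(\<lambda>k. g (x k * w)) \<longlonglongrightarrow> g (a * w)"
      by (rule isCont_tendsto_compose[rotated]) (use g in \<open>simp add: continuous_on_eq_continuous_at\<close>)
    thus "(\<lambda>k. (1-w) powr (q-1) * g (x k*w)) \<longlonglongrightarrow> (1-w) powr (q-1) * g (a*w)"
      by (intro tendsto_intros)
  qed
qed

lemma J_cont:
  fixes q :: real and g :: "real \<Rightarrow> real"
  assumes q: "0<q" and g: "continuous_on UNIV g"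
  shows "continuous_on {0..} (Jf q g)"
proof -
  have "continuous_on {0..} (\<lambda>u. u powr q * integral {0..1} (\<lambda>w. (1-w) powr (q-1) * g (u*w)))"
    by (intro continuous_intros continuous_on_powr' continuous_on_subset[OF L_cont[OF q g]]) (use q in auto)
  moreover have "Jf q g u = u powr q * integral {0..1} (\<lambda>w. (1-w) powr (q-1) * g (u*w))" if "u \<in> {0..}" for u
  proof (cases "u = 0")
    case True thus ?thesis by (simp add: Jf_def)
  next
    case False thus ?thesis using that J_scale[OF q _ g, of u] by simp
  qed
  ultimately show ?thesis using continuous_on_cong by (metis (no_types, lifting))
qed




lemma not_nonpos_Int_pos: "(x::real) > 0 \<Longrightarrow> x \<notin> \<int>\<^sub>\<le>\<^sub>0"
  using nonpos_Ints_nonpos by fastforce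

lemma Beta_a1: "(a::real) > 0 \<Longrightarrow> Beta a 1 = 1/a"
proof -
  assume a: "a > 0"
  have g: "Gamma a \<noteq> 0" using Gamma_real_pos[OF a] by linarith
  show ?thesis unfolding Beta_def using Gamma_plus1[OF not_nonpos_Int_pos[OF a]] a g
    by (simp add: field_simps)
qed

lemma Beta_refl: "(a::real) > 0 \<Longrightarrow> a < 1 \<Longrightarrow> Beta a (1-a) = Gamma a * Gamma (1-a)"
  unfolding Beta_def by simp

context
  fixes \<alpha> :: real and h :: "real \<Rightarrow> real"
  assumes \<alpha>0: "0 < \<alpha>" and \<alpha>1: "\<alpha> < 1" and hc: "continuous_on UNIV h"
begin

lemma P_eq:
  assumes t: "0 < t"
  shows "integral {0..t} (\<lambda>s. (t-s) powr \<alpha> * h s) = \<alpha> * integral {0..t} (Jf \<alpha> h)"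
proof -
  have c: "integral {0..t} (\<lambda>u. (t-u) powr (1-1) * Jf \<alpha> h u)
      = Beta \<alpha> 1 * integral {0..t} (\<lambda>s. (t-s) powr (1+\<alpha>-1) * h s)"
    using conv_assoc(2)[of 1 \<alpha> t h] \<alpha>0 t hc unfolding Jf_def by simp
  have "integral {0..t} (\<lambda>u. (t-u) powr (1-1) * Jf \<alpha> h u) = integral {0..t} (Jf \<alpha> h)"
    by (rule integral_spike[of "{t}"]) auto
  with c have "integral {0..t} (Jf \<alpha> h) = (1/\<alpha>) * integral {0..t} (\<lambda>s. (t-s) powr \<alpha> * h s)"
    using Beta_a1[OF \<alpha>0] by simp
  thus ?thesis using \<alpha>0 by simp
qed

lemma P_deriv:
  assumes t: "0 < t"
  shows "((\<lambda>\<tau>. integral {0..\<tau>} (\<lambda>s. (\<tau>-s) powr \<alpha> * h s)) has_real_derivative \<alpha> * Jf \<alpha> h t) (at t)"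
proof -
  have "((\<lambda>x. integral {0..x} (Jf \<alpha> h)) has_real_derivative Jf \<alpha> h t) (at t within {0..t+1})"
    by (rule integral_has_real_derivative) (use t J_cont[OF \<alpha>0 hc] in \<open>auto intro: continuous_on_subset\<close>)
  hence "((\<lambda>x. integral {0..x} (Jf \<alpha> h)) has_real_derivative Jf \<alpha> h t) (at t)"
    using at_within_Icc_at[of 0 t "t+1"] t by simp
  hence "((\<lambda>x. \<alpha> * integral {0..x} (Jf \<alpha> h)) has_real_derivative \<alpha> * Jf \<alpha> h t) (at t)"
    by (rule DERIV_cmult)
  thus ?thesis
    by (rule has_field_derivative_transform_within_open[of _ _ _ "{0<..}"]) (use t P_eq in auto)
qed

lemma RL_has_integral:
  assumes \<tau>: "0 < \<tau>"
  shows "((\<lambda>s. (D * s powr (\<alpha>-1) - Jf \<alpha> h s / Gamma \<alpha>) / (\<tau>-s) powr \<alpha>) has_integral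
          (D * Gamma \<alpha> * Gamma (1-\<alpha>) - Gamma (1-\<alpha>) * integral {0..\<tau>} h)) {0..\<tau>}"
proof -
  have G: "Gamma \<alpha> \<noteq> 0" using Gamma_real_pos[OF \<alpha>0] by simp
  have a: "((\<lambda>u. (\<tau>-u) powr (-\<alpha>) * u powr (\<alpha>-1)) has_integral Gamma \<alpha> * Gamma (1-\<alpha>)) {0..\<tau>}"
    using beta_scaled[of "1-\<alpha>" \<alpha> 0 \<tau>] \<alpha>0 \<alpha>1 \<tau> Beta_refl[OF \<alpha>0 \<alpha>1] by simp
  have bi: "(\<lambda>u. (\<tau>-u) powr (1-\<alpha>-1) * Jf \<alpha> h u) integrable_on {0..\<tau>}"
    using conv_assoc(1)[of "1-\<alpha>" \<alpha> \<tau> h] \<alpha>0 \<alpha>1 \<tau> hc unfolding Jf_def by simp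
  have bv: "integral {0..\<tau>} (\<lambda>u. (\<tau>-u) powr (1-\<alpha>-1) * Jf \<alpha> h u)
      = Beta \<alpha> (1-\<alpha>) * integral {0..\<tau>} (\<lambda>s. (\<tau>-s) powr (1-\<alpha>+\<alpha>-1) * h s)"
    using conv_assoc(2)[of "1-\<alpha>" \<alpha> \<tau> h] \<alpha>0 \<alpha>1 \<tau> hc unfolding Jf_def by simp
  have "integral {0..\<tau>} (\<lambda>s. (\<tau>-s) powr (1-\<alpha>+\<alpha>-1) * h s) = integral {0..\<tau>} h"
    by (rule integral_spike[of "{\<tau>}"]) auto
  with bv have bv2: "integral {0..\<tau>} (\<lambda>u. (\<tau>-u) powr (-\<alpha>) * Jf \<alpha> h u) = Gamma \<alpha> * Gamma (1-\<alpha>) * integral {0..\<tau>} h"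
    using Beta_refl[OF \<alpha>0 \<alpha>1] by simp
  have b: "((\<lambda>u. (\<tau>-u) powr (-\<alpha>) * Jf \<alpha> h u) has_integral Gamma \<alpha> * Gamma (1-\<alpha>) * integral {0..\<tau>} h) {0..\<tau>}"
  proof -
    have bi': "(\<lambda>u. (\<tau>-u) powr (-\<alpha>) * Jf \<alpha> h u) integrable_on {0..\<tau>}" using bi by simp
    show ?thesis unfolding bv2[symmetric] using bi' by (simp add: has_integral_integral)
  qed
  have c: "((\<lambda>u. D * ((\<tau>-u) powr (-\<alpha>) * u powr (\<alpha>-1)) - (1/Gamma \<alpha>) * ((\<tau>-u) powr (-\<alpha>) * Jf \<alpha> h u))
     has_integral D * (Gamma \<alpha> * Gamma (1-\<alpha>)) - (1/Gamma \<alpha>) * (Gamma \<alpha> * Gamma (1-\<alpha>) * integral {0..\<tau>} h)) {0..\<tau>}"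
    by (rule has_integral_diff[OF has_integral_mult_right[OF a] has_integral_mult_right[OF b]])
  have eq: "D * ((\<tau>-u) powr (-\<alpha>) * u powr (\<alpha>-1)) - (1/Gamma \<alpha>) * ((\<tau>-u) powr (-\<alpha>) * Jf \<alpha> h u)
        = (D * u powr (\<alpha>-1) - Jf \<alpha> h u / Gamma \<alpha>) / (\<tau>-u) powr \<alpha>" if "u \<in> {0..\<tau>}" for u
  proof (cases "u = \<tau>")
    case True thus ?thesis by simp
  next
    case False
    hence "\<tau> - u > 0" using that by auto
    hence "(\<tau>-u) powr (-\<alpha>) = 1 / (\<tau>-u) powr \<alpha>" and "(\<tau>-u) powr \<alpha> > 0" by (simp_all add: powr_minus_divide)
    thus ?thesis using G by (simp add: field_simps)
  qed
  have "D * (Gamma \<alpha> * Gamma (1-\<alpha>)) - (1/Gamma \<alpha>) * (Gamma \<alpha> * Gamma (1-\<alpha>) * integral {0..\<tau>} h)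
      = D * Gamma \<alpha> * Gamma (1-\<alpha>) - Gamma (1-\<alpha>) * integral {0..\<tau>} h" using G by (simp add: field_simps)
  with c have c2: "((\<lambda>u. D * ((\<tau>-u) powr (-\<alpha>) * u powr (\<alpha>-1)) - (1/Gamma \<alpha>) * ((\<tau>-u) powr (-\<alpha>) * Jf \<alpha> h u))
     has_integral (D * Gamma \<alpha> * Gamma (1-\<alpha>) - Gamma (1-\<alpha>) * integral {0..\<tau>} h)) {0..\<tau>}" by (simp add: mult.assoc)
  show ?thesis by (rule has_integral_eq[OF eq c2])
qed

end




context
  fixes \<alpha> :: real
  assumes \<alpha>0: "0 < \<alpha>" and \<alpha>1: "\<alpha> < 1"
begin

lemma pow_lower:
  assumes t: "0 < t" and v: "0 \<le> v" "v \<le> t"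
  shows "v * t powr (\<alpha>-1) \<le> v powr \<alpha>"
proof (cases "v = 0")
  case True thus ?thesis by simp
next
  case False
  hence vp: "v > 0" using v by auto
  have "t powr (\<alpha>-1) \<le> v powr (\<alpha>-1)" by (rule powr_mono2') (use \<alpha>1 vp v in auto)
  hence "v * t powr (\<alpha>-1) \<le> v * v powr (\<alpha>-1)" using vp by (simp add: mult_left_mono)
  also have "v * v powr (\<alpha>-1) = v powr \<alpha>" using vp powr_add[of v 1 "\<alpha>-1"] by simp
  finally show ?thesis .
qed

lemma pow_subadd:
  assumes s: "0 \<le> s" "s \<le> t"
  shows "t powr \<alpha> \<le> (t-s) powr \<alpha> + s powr \<alpha>"
proof (cases "t = 0")
  case True thus ?thesis using s by simp
next
  case False
  hence t: "t > 0" using s by auto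
  have "s * t powr (\<alpha>-1) \<le> s powr \<alpha>" by (rule pow_lower) (use t s in auto)
  moreover have "(t-s) * t powr (\<alpha>-1) \<le> (t-s) powr \<alpha>" by (rule pow_lower) (use t s in auto)
  moreover have "t * t powr (\<alpha>-1) = t powr \<alpha>" using t powr_add[of t 1 "\<alpha>-1"] by simp
  ultimately show ?thesis by (simp add: algebra_simps)
qed

definition Kk :: "real \<Rightarrow> real \<Rightarrow> real" where
  "Kk t s = (max t 0) powr \<alpha> - (max (t-s) 0) powr \<alpha>"

definition om :: "real \<Rightarrow> real" where
  "om s = 1 + (max s 0) powr \<alpha>"

lemma om_pos: "om s \<ge> 1" by (simp add: om_def)

lemma om_cont: "continuous_on UNIV om"
  unfolding om_def by (intro continuous_intros continuous_on_powr') (use \<alpha>0 in auto)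

lemma Kk_cont: "continuous_on UNIV (\<lambda>t. Kk t s)"
  unfolding Kk_def by (intro continuous_intros continuous_on_powr') (use \<alpha>0 in auto)

lemma Kk_nonneg: "0 \<le> s \<Longrightarrow> 0 \<le> Kk t s"
  unfolding Kk_def by (auto intro!: powr_mono2 simp: \<alpha>0 less_imp_le)

lemma Kk_le_t: "0 \<le> Kk t s \<Longrightarrow> Kk t s \<le> (max t 0) powr \<alpha>"
  unfolding Kk_def by simp

lemma Kk_le_s:
  assumes s: "0 \<le> s" shows "Kk t s \<le> s powr \<alpha>"
proof (cases "s \<le> t")
  case True
  thus ?thesis using pow_subadd[of s t] s by (simp add: Kk_def max_def)
next
  case False
  hence "max (t-s) 0 = 0" by simp
  moreover have "(max t 0) powr \<alpha> \<le> s powr \<alpha>" using False s by (intro powr_mono2) (auto simp: \<alpha>0 less_imp_le)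
  ultimately show ?thesis by (simp add: Kk_def)
qed

lemma Kk_le_lin:
  assumes t: "0 < t" and s: "0 \<le> s" shows "Kk t s \<le> s * t powr (\<alpha>-1)"
proof (cases "s \<le> t")
  case True
  have "(t-s) * t powr (\<alpha>-1) \<le> (t-s) powr \<alpha>" by (rule pow_lower) (use t s True in auto)
  moreover have "t * t powr (\<alpha>-1) = t powr \<alpha>" using t powr_add[of t 1 "\<alpha>-1"] by simp
  ultimately show ?thesis using True t by (simp add: Kk_def algebra_simps)
next
  case False
  have "Kk t s = t powr \<alpha>" using False t by (simp add: Kk_def)
  also have "\<dots> = t * t powr (\<alpha>-1)" using t powr_add[of t 1 "\<alpha>-1"] by simp
  also have "\<dots> \<le> s * t powr (\<alpha>-1)" using False by (intro mult_right_mono) auto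
  finally show ?thesis .
qed

lemma Kk_om:
  assumes s: "0 \<le> s" shows "Kk t s * om s \<le> s powr \<alpha> * om t"
proof -
  define t' where "t' = max t 0"
  have t': "0 \<le> t'" by (simp add: t'_def)
  have K0: "0 \<le> Kk t s" by (rule Kk_nonneg[OF s])
  have omt: "om t = 1 + t' powr \<alpha>" by (simp add: om_def t'_def)
  have oms: "om s = 1 + s powr \<alpha>" using s by (simp add: om_def)
  show ?thesis
  proof (cases "t' \<le> s")
    case True
    have Kt: "Kk t s \<le> t' powr \<alpha>" using Kk_le_t[OF K0] by (simp add: t'_def)
    have ts: "t' powr \<alpha> \<le> s powr \<alpha>" using True t' by (intro powr_mono2) (auto simp: \<alpha>0 less_imp_le)
    have "Kk t s * om s \<le> t' powr \<alpha> * (1 + s powr \<alpha>)" unfolding oms by (rule mult_right_mono[OF Kt]) simp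
    also have "\<dots> = t' powr \<alpha> + t' powr \<alpha> * s powr \<alpha>" by (simp add: algebra_simps)
    also have "\<dots> \<le> s powr \<alpha> + s powr \<alpha> * t' powr \<alpha>" using ts by (simp add: mult.commute)
    also have "\<dots> = s powr \<alpha> * om t" unfolding omt by (simp add: algebra_simps)
    finally show ?thesis .
  next
    case False
    have Ks: "Kk t s \<le> s powr \<alpha>" by (rule Kk_le_s[OF s])
    have st: "s powr \<alpha> \<le> t' powr \<alpha>" using False s by (intro powr_mono2) (auto simp: \<alpha>0 less_imp_le)
    have "Kk t s * om s \<le> s powr \<alpha> * (1 + s powr \<alpha>)" unfolding oms by (rule mult_right_mono[OF Ks]) simp
    also have "\<dots> \<le> s powr \<alpha> * (1 + t' powr \<alpha>)" using st by (intro mult_left_mono) auto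
    finally show ?thesis unfolding omt .
  qed
qed

lemma spow_le: "0 \<le> s \<Longrightarrow> s powr \<alpha> \<le> 1 + s"
proof -
  assume s: "0 \<le> s"
  have "s powr \<alpha> \<le> (1+s) powr \<alpha>" using s by (intro powr_mono2) (auto simp: \<alpha>0 less_imp_le)
  also have "\<dots> \<le> (1+s) powr 1" using s \<alpha>1 by (intro powr_mono) auto
  finally show ?thesis using s by simp
qed

end



locale setting =
  fixes \<alpha> T k :: real and a :: "real \<Rightarrow> real"
  assumes \<alpha>0: "0 < \<alpha>" and \<alpha>1: "\<alpha> < 1"
    and ac: "continuous_on {0..} a"
    and T0: "0 < T"
    and aint: "(\<lambda>s. s powr (1 + \<alpha>) * \<bar>a s\<bar>) integrable_on {T..}"
    and kdef: "max 1 (T powr \<alpha>) / Gamma (1 + \<alpha>) *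
           (integral {0..T} (\<lambda>s. \<bar>a s\<bar>) + integral {T..} (\<lambda>s. s powr \<alpha> * \<bar>a s\<bar>)) = k"
    and k1: "k < 1"
begin

definition ah :: "real \<Rightarrow> real" where "ah s = a (max s 0)"

lemma ah_eq: "0 \<le> s \<Longrightarrow> ah s = a s" by (simp add: ah_def)

lemma ah_cont: "continuous_on UNIV ah"
  unfolding ah_def by (rule continuous_on_compose2[OF ac]) (auto intro!: continuous_intros)

lemma ah_meas[measurable]: "ah \<in> borel_measurable borel"
  by (rule borel_measurable_continuous_onI[OF ah_cont])

definition rho :: "real \<Rightarrow> real" where "rho s = (1 + s powr \<alpha>) * (1 + s) * \<bar>ah s\<bar>"

lemma rho_meas[measurable]: "rho \<in> borel_measurable borel"
  unfolding rho_def by measurable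

lemma rho_int: "set_integrable lborel {0..} rho"
proof -
  have i1: "set_integrable lborel {0..T} rho"
    unfolding rho_def by (rule borel_integrable_atLeastAtMost')
      (intro continuous_intros continuous_on_powr' continuous_on_subset[OF ah_cont], auto simp: \<alpha>0)
  have g1: "(\<lambda>s. s powr (1 + \<alpha>) * \<bar>ah s\<bar>) integrable_on {T..}"
    by (rule integrable_eq[OF aint]) (use T0 in \<open>auto simp: ah_eq\<close>)
  hence g1a: "(\<lambda>s. s powr (1 + \<alpha>) * \<bar>ah s\<bar>) absolutely_integrable_on {T..}"
    by (subst absolutely_integrable_on_iff_nonneg) auto
  have g1l: "set_integrable lborel {T..} (\<lambda>s. s powr (1 + \<alpha>) * \<bar>ah s\<bar>)"
    by (rule abs_int_lborel[OF _ _ g1a]) auto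
  define C where "C = (1 / T powr \<alpha> + 1) * (1 / T + 1)"
  have g2: "set_integrable lborel {T..} (\<lambda>s. C * (s powr (1 + \<alpha>) * \<bar>ah s\<bar>))"
    by (rule set_integrable_mult_right[OF g1l])
  have i2: "set_integrable lborel {T..} rho"
  proof (rule set_integrable_bound[OF g2])
    show "set_borel_measurable lborel {T..} rho" unfolding set_borel_measurable_def by measurable
    show "AE x in lborel. x \<in> {T..} \<longrightarrow> norm (rho x) \<le> norm (C * (x powr (1 + \<alpha>) * \<bar>ah x\<bar>))"
    proof (rule AE_I2, rule impI)
      fix s assume s: "s \<in> {T..}"
      hence sp: "s > 0" using T0 by auto
      have Ta: "T powr \<alpha> > 0" using T0 by simp
      have "T powr \<alpha> \<le> s powr \<alpha>" using s T0 by (intro powr_mono2) (auto simp: \<alpha>0 less_imp_le)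
      hence e1: "1 + s powr \<alpha> \<le> (1 / T powr \<alpha> + 1) * s powr \<alpha>"
        using Ta by (simp add: field_simps)
      have e2: "1 + s \<le> (1 / T + 1) * s" using s T0 by (simp add: field_simps)
      have "(1 + s powr \<alpha>) * (1 + s) \<le> ((1 / T powr \<alpha> + 1) * s powr \<alpha>) * ((1 / T + 1) * s)"
        using e1 e2 sp by (intro mult_mono) auto
      also have "\<dots> = C * s powr (1 + \<alpha>)"
        using sp powr_add[of s 1 \<alpha>] by (simp add: C_def algebra_simps)
      finally have "(1 + s powr \<alpha>) * (1 + s) * \<bar>ah s\<bar> \<le> C * s powr (1 + \<alpha>) * \<bar>ah s\<bar>"
        by (intro mult_right_mono) auto
      moreover have "C \<ge> 0" using T0 by (simp add: C_def)
      moreover have "rho s \<ge> 0" using sp by (simp add: rho_def)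
      ultimately show "norm (rho s) \<le> norm (C * (s powr (1 + \<alpha>) * \<bar>ah s\<bar>))"
        by (simp add: rho_def mult.assoc)
    qed
  qed
  have "set_integrable lborel ({0..T} \<union> {T..}) rho" by (rule set_integrable_Un[OF i1 i2]) auto
  also have "{0..T} \<union> {T..} = ({0..} :: real set)" using T0 by auto
  finally show ?thesis .
qed

lemma rho_nonneg: "0 \<le> s \<Longrightarrow> 0 \<le> rho s" by (simp add: rho_def)

lemma rho_hk: "rho integrable_on {0..}"
  using set_borel_integral_eq_integral(1)[OF rho_int] .

lemma dom_int:
  fixes f :: "real \<Rightarrow> real"
  assumes [measurable]: "f \<in> borel_measurable borel" and b: "\<And>s. 0 \<le> s \<Longrightarrow> \<bar>f s\<bar> \<le> C * rho s"
  shows "set_integrable lborel {0..} f" "f integrable_on {0..}"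
proof -
  have g: "set_integrable lborel {0..} (\<lambda>s. C * rho s)" by (rule set_integrable_mult_right[OF rho_int])
  show si: "set_integrable lborel {0..} f"
  proof (rule set_integrable_bound[OF g])
    show "set_borel_measurable lborel {0..} f" unfolding set_borel_measurable_def by measurable
    show "AE x in lborel. x \<in> {0..} \<longrightarrow> norm (f x) \<le> norm (C * rho x)"
    proof (intro AE_I2 impI)
      fix x :: real assume "x \<in> {0..}"
      hence "\<bar>f x\<bar> \<le> C * rho x" using b by auto
      thus "norm (f x) \<le> norm (C * rho x)" by simp
    qed
  qed
  show "f integrable_on {0..}" using set_borel_integral_eq_integral(1)[OF si] .
qed

end



context setting
begin

lemma Kk_cont_s: "continuous_on UNIV (\<lambda>s. Kk \<alpha> t s)"
proof -
  have "continuous_on UNIV (\<lambda>s. (max t 0) powr \<alpha> - (max (t-s) 0) powr \<alpha>)"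
    by (intro continuous_intros continuous_on_powr') (use \<alpha>0 in auto)
  moreover have "(\<lambda>s. Kk \<alpha> t s) = (\<lambda>s. (max t 0) powr \<alpha> - (max (t-s) 0) powr \<alpha>)"
    by (simp add: Kk_def[OF \<alpha>0 \<alpha>1])
  ultimately show ?thesis by simp
qed

lemma Kk_meas[measurable]: "(\<lambda>s. Kk \<alpha> t s) \<in> borel_measurable borel"
  by (rule borel_measurable_continuous_onI[OF Kk_cont_s])

lemma om_meas[measurable]: "om \<alpha> \<in> borel_measurable borel"
  by (rule borel_measurable_continuous_onI[OF om_cont[OF \<alpha>0 \<alpha>1]])

lemma spow_rho: "0 \<le> s \<Longrightarrow> s powr \<alpha> * om \<alpha> s * \<bar>ah s\<bar> \<le> rho s"
proof -
  assume s: "0 \<le> s"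
  have "s powr \<alpha> \<le> 1 + s" by (rule spow_le[OF \<alpha>0 \<alpha>1 s])
  hence "s powr \<alpha> * (1 + s powr \<alpha>) \<le> (1 + s) * (1 + s powr \<alpha>)" by (intro mult_right_mono) auto
  hence "s powr \<alpha> * om \<alpha> s \<le> (1 + s powr \<alpha>) * (1 + s)" using s by (simp add: om_def[OF \<alpha>0 \<alpha>1] mult.commute)
  hence "s powr \<alpha> * om \<alpha> s * \<bar>ah s\<bar> \<le> (1 + s powr \<alpha>) * (1 + s) * \<bar>ah s\<bar>" by (rule mult_right_mono) simp
  thus ?thesis by (simp add: rho_def)
qed

lemma spow_rho2: "0 \<le> s \<Longrightarrow> s powr \<alpha> * \<bar>ah s\<bar> \<le> rho s"
proof -
  assume s: "0 \<le> s"
  have "s powr \<alpha> * \<bar>ah s\<bar> * 1 \<le> s powr \<alpha> * \<bar>ah s\<bar> * om \<alpha> s"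
    by (rule mult_left_mono) (use om_pos[OF \<alpha>0 \<alpha>1, of s] in auto)
  thus ?thesis using spow_rho[OF s] by (simp add: algebra_simps)
qed

lemma Ia_int: "(\<lambda>s. s powr \<alpha> * \<bar>ah s\<bar>) integrable_on {0..}"
  by (rule dom_int(2)[of _ 1]) (auto simp: spow_rho2)

lemma Ky_int:
  fixes y :: "real \<Rightarrow> real"
  assumes yc: "continuous_on UNIV y" and yb: "\<And>s. 0 \<le> s \<Longrightarrow> \<bar>y s\<bar> \<le> B * om \<alpha> s"
  shows "(\<lambda>s. Kk \<alpha> t s * ah s * y s) integrable_on {0..}"
    "\<And>s. 0 \<le> s \<Longrightarrow> \<bar>Kk \<alpha> t s * ah s * y s\<bar> \<le> B * rho s"
proof -
  have [measurable]: "y \<in> borel_measurable borel" by (rule borel_measurable_continuous_onI[OF yc])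
  have "0 \<le> B * om \<alpha> 0" using yb[of 0] abs_ge_zero[of "y 0"] by linarith
  hence B0: "0 \<le> B" using om_pos[OF \<alpha>0 \<alpha>1, of 0] by (simp add: zero_le_mult_iff)
  show bd: "\<bar>Kk \<alpha> t s * ah s * y s\<bar> \<le> B * rho s" if s: "0 \<le> s" for s
  proof -
    have K0: "0 \<le> Kk \<alpha> t s" by (rule Kk_nonneg[OF \<alpha>0 \<alpha>1 s])
    have Ks: "Kk \<alpha> t s \<le> s powr \<alpha>" by (rule Kk_le_s[OF \<alpha>0 \<alpha>1 s])
    have "\<bar>Kk \<alpha> t s * ah s * y s\<bar> = Kk \<alpha> t s * \<bar>ah s\<bar> * \<bar>y s\<bar>" using K0 by (simp add: abs_mult)
    also have "\<dots> \<le> s powr \<alpha> * \<bar>ah s\<bar> * \<bar>y s\<bar>"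
      by (rule mult_right_mono[OF mult_right_mono[OF Ks]]) auto
    also have "\<dots> \<le> s powr \<alpha> * \<bar>ah s\<bar> * (B * om \<alpha> s)"
      by (rule mult_left_mono[OF yb[OF s]]) auto
    also have "\<dots> = B * (s powr \<alpha> * om \<alpha> s * \<bar>ah s\<bar>)" by (simp add: algebra_simps)
    also have "\<dots> \<le> B * rho s" by (rule mult_left_mono[OF spow_rho[OF s] B0])
    finally show ?thesis .
  qed
  show "(\<lambda>s. Kk \<alpha> t s * ah s * y s) integrable_on {0..}"
    by (rule dom_int(2)[of _ B]) (use bd in auto)
qed

lemma Ky_diff_bound:
  fixes y1 y2 :: "real \<Rightarrow> real"
  assumes c1: "continuous_on UNIV y1" and b1: "\<And>s. 0 \<le> s \<Longrightarrow> \<bar>y1 s\<bar> \<le> B1 * om \<alpha> s"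
    and c2: "continuous_on UNIV y2" and b2: "\<And>s. 0 \<le> s \<Longrightarrow> \<bar>y2 s\<bar> \<le> B2 * om \<alpha> s"
    and d: "\<And>s. 0 \<le> s \<Longrightarrow> \<bar>y1 s - y2 s\<bar> \<le> D * om \<alpha> s"
  shows "\<bar>integral {0..} (\<lambda>s. Kk \<alpha> t s * ah s * y1 s) - integral {0..} (\<lambda>s. Kk \<alpha> t s * ah s * y2 s)\<bar>
         \<le> D * om \<alpha> t * integral {0..} (\<lambda>s. s powr \<alpha> * \<bar>ah s\<bar>)"
proof -
  have i1: "(\<lambda>s. Kk \<alpha> t s * ah s * y1 s) integrable_on {0..}" by (rule Ky_int(1)[OF c1 b1])
  have i2: "(\<lambda>s. Kk \<alpha> t s * ah s * y2 s) integrable_on {0..}" by (rule Ky_int(1)[OF c2 b2])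
  have nb: "norm (integral {0..} (\<lambda>s. Kk \<alpha> t s * ah s * y1 s - Kk \<alpha> t s * ah s * y2 s))
      \<le> integral {0..} (\<lambda>s. (D * om \<alpha> t) * (s powr \<alpha> * \<bar>ah s\<bar>))"
  proof (rule integral_norm_bound_integral)
    show "(\<lambda>s. Kk \<alpha> t s * ah s * y1 s - Kk \<alpha> t s * ah s * y2 s) integrable_on {0..}"
      by (rule integrable_diff[OF i1 i2])
    show "(\<lambda>s. (D * om \<alpha> t) * (s powr \<alpha> * \<bar>ah s\<bar>)) integrable_on {0..}"
      by (rule integrable_on_mult_right[OF Ia_int])
    fix s :: real assume "s \<in> {0..}"
    hence s: "0 \<le> s" by simp
    have K0: "0 \<le> Kk \<alpha> t s" by (rule Kk_nonneg[OF \<alpha>0 \<alpha>1 s])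
    have "\<bar>Kk \<alpha> t s * ah s * y1 s - Kk \<alpha> t s * ah s * y2 s\<bar> = \<bar>ah s\<bar> * (Kk \<alpha> t s * \<bar>y1 s - y2 s\<bar>)"
    proof -
      have "Kk \<alpha> t s * ah s * y1 s - Kk \<alpha> t s * ah s * y2 s = ah s * (Kk \<alpha> t s * (y1 s - y2 s))"
        by (simp add: algebra_simps)
      thus ?thesis using K0 by (simp add: abs_mult)
    qed
    also have "\<dots> \<le> \<bar>ah s\<bar> * (Kk \<alpha> t s * (D * om \<alpha> s))"
      using d[OF s] K0 by (intro mult_left_mono) auto
    also have "\<dots> = \<bar>ah s\<bar> * D * (Kk \<alpha> t s * om \<alpha> s)" by (simp add: algebra_simps)
    also have "\<dots> \<le> \<bar>ah s\<bar> * D * (s powr \<alpha> * om \<alpha> t)"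
    proof (rule mult_left_mono[OF Kk_om[OF \<alpha>0 \<alpha>1 s]])
      have "0 \<le> \<bar>y1 s - y2 s\<bar>" by simp
      hence "0 \<le> D * om \<alpha> s" using d[OF s] by linarith
      hence "0 \<le> D" using om_pos[OF \<alpha>0 \<alpha>1, of s] by (simp add: zero_le_mult_iff)
      thus "0 \<le> \<bar>ah s\<bar> * D" by simp
    qed
    finally show "norm (Kk \<alpha> t s * ah s * y1 s - Kk \<alpha> t s * ah s * y2 s) \<le> D * om \<alpha> t * (s powr \<alpha> * \<bar>ah s\<bar>)"
      by (simp add: algebra_simps)
  qed
  have eqd: "integral {0..} (\<lambda>s. Kk \<alpha> t s * ah s * y1 s) - integral {0..} (\<lambda>s. Kk \<alpha> t s * ah s * y2 s)
      = integral {0..} (\<lambda>s. Kk \<alpha> t s * ah s * y1 s - Kk \<alpha> t s * ah s * y2 s)"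
    by (rule integral_diff[OF i1 i2, symmetric])
  have eqr: "integral {0..} (\<lambda>s. (D * om \<alpha> t) * (s powr \<alpha> * \<bar>ah s\<bar>)) = D * om \<alpha> t * integral {0..} (\<lambda>s. s powr \<alpha> * \<bar>ah s\<bar>)"
    by simp
  from nb have "\<bar>integral {0..} (\<lambda>s. Kk \<alpha> t s * ah s * y1 s - Kk \<alpha> t s * ah s * y2 s)\<bar>
      \<le> D * om \<alpha> t * integral {0..} (\<lambda>s. s powr \<alpha> * \<bar>ah s\<bar>)"
    by (simp only: real_norm_def eqr)
  thus ?thesis by (simp only: eqd)
qed


lemma Ky_cont:
  fixes y :: "real \<Rightarrow> real"
  assumes yc: "continuous_on UNIV y" and yb: "\<And>s. 0 \<le> s \<Longrightarrow> \<bar>y s\<bar> \<le> B * om \<alpha> s"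
  shows "continuous_on UNIV (\<lambda>t. integral {0..} (\<lambda>s. Kk \<alpha> t s * ah s * y s))"
proof (rule continuous_on_sequentiallyI)
  fix x :: "nat \<Rightarrow> real" and a assume x: "x \<longlonglongrightarrow> a"
  show "(\<lambda>n. integral {0..} (\<lambda>s. Kk \<alpha> (x n) s * ah s * y s)) \<longlonglongrightarrow> integral {0..} (\<lambda>s. Kk \<alpha> a s * ah s * y s)"
  proof (rule dominated_convergence(2))
    show "(\<lambda>s. Kk \<alpha> (x k) s * ah s * y s) integrable_on {0..}" for k by (rule Ky_int(1)[OF yc yb])
    show "(\<lambda>s. B * rho s) integrable_on {0..}" by (rule integrable_on_mult_right[OF rho_hk])
    fix k and s :: real assume "s \<in> {0..}"
    thus "norm (Kk \<alpha> (x k) s * ah s * y s) \<le> B * rho s" using Ky_int(2)[OF yc yb] by simp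
  next
    fix s :: real assume "s \<in> {0..}"
    have "(\<lambda>k. Kk \<alpha> (x k) s) \<longlonglongrightarrow> Kk \<alpha> a s"
      by (rule isCont_tendsto_compose[OF _ x]) (use Kk_cont[OF \<alpha>0 \<alpha>1, of s] in \<open>simp add: continuous_on_eq_continuous_at\<close>)
    thus "(\<lambda>k. Kk \<alpha> (x k) s * ah s * y s) \<longlonglongrightarrow> Kk \<alpha> a s * ah s * y s" by (intro tendsto_intros)
  qed
qed

end



context setting
begin

definition Ia :: real where "Ia = integral {0..} (\<lambda>s. s powr \<alpha> * \<bar>ah s\<bar>)"
definition kk :: real where "kk = Ia / Gamma (1 + \<alpha>)"

lemma G1_pos: "0 < Gamma (1 + \<alpha>)"
proof -
  have "(0::real) < 1 + \<alpha>" using \<alpha>0 by simp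
  from Gamma_real_pos[OF this] show ?thesis .
qed

lemma omnz: "om \<alpha> t \<noteq> 0" using om_pos[OF \<alpha>0 \<alpha>1, of t] by linarith

lemma pc: "continuous_on UNIV (\<lambda>t. (max t 0) powr \<alpha>)"
  by (rule continuous_on_powr') (auto intro: continuous_intros simp: \<alpha>0)

lemma Ia_nonneg: "0 \<le> Ia"
  unfolding Ia_def by (rule integral_nonneg[OF Ia_int]) auto

lemma kk_nonneg: "0 \<le> kk" unfolding kk_def using Ia_nonneg G1_pos by simp

lemma kk_le: "kk \<le> k"
proof -
  define f where "f = (\<lambda>s. s powr \<alpha> * \<bar>ah s\<bar>)"
  have pc0: "continuous_on {0..T} (\<lambda>s. s powr \<alpha>)"
    by (rule continuous_on_powr') (auto intro: continuous_intros simp: \<alpha>0)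
  have fc: "continuous_on {0..T} f" unfolding f_def
    by (intro continuous_on_mult pc0 continuous_on_subset[OF ah_cont] continuous_intros) auto
  have f1: "f integrable_on {0..T}" by (rule integrable_continuous_interval[OF fc])
  have fs: "set_integrable lborel {0..} f" unfolding f_def by (rule dom_int(1)[of _ 1]) (auto simp: spow_rho2)
  have f2l: "set_integrable lborel {T..} f" by (rule set_integrable_subset[OF fs]) (use T0 in auto)
  have f2: "f integrable_on {T..}" using set_borel_integral_eq_integral(1)[OF f2l] .
  have "Ia = integral ({0..T} \<union> {T..}) f"
  proof -
    have "{0..T} \<union> {T..} = ({0..} :: real set)" using T0 by auto
    thus ?thesis by (simp add: Ia_def f_def)
  qed
  also have "\<dots> = integral {0..T} f + integral {T..} f"
  proof (rule integral_Un[OF f1 f2])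
    have "{0..T} \<inter> {T..} = {T}" using T0 by auto
    thus "negligible ({0..T} \<inter> {T..})" by simp
  qed
  finally have Iasplit: "Ia = integral {0..T} f + integral {T..} f" .
  define I1 where "I1 = integral {0..T} (\<lambda>s. \<bar>a s\<bar>)"
  define I2 where "I2 = integral {T..} (\<lambda>s. s powr \<alpha> * \<bar>a s\<bar>)"
  have ac1: "(\<lambda>s. \<bar>a s\<bar>) integrable_on {0..T}"
    by (rule integrable_continuous_interval) (intro continuous_intros continuous_on_subset[OF ac], auto)
  have I1nn: "0 \<le> I1" unfolding I1_def by (rule integral_nonneg[OF ac1]) auto
  have e2: "integral {T..} f = I2" unfolding I2_def f_def
    by (rule integral_cong) (use T0 in \<open>auto simp: ah_eq\<close>)
  have I2nn: "0 \<le> I2" unfolding e2[symmetric] by (rule integral_nonneg[OF f2]) (auto simp: f_def)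
  have e1: "integral {0..T} f \<le> integral {0..T} (\<lambda>s. T powr \<alpha> * \<bar>a s\<bar>)"
  proof (rule integral_le[OF f1])
    show "(\<lambda>s. T powr \<alpha> * \<bar>a s\<bar>) integrable_on {0..T}" by (rule integrable_on_mult_right[OF ac1])
    fix s assume s: "s \<in> {0..T}"
    have "s powr \<alpha> \<le> T powr \<alpha>" using s by (intro powr_mono2) (auto simp: \<alpha>0 less_imp_le)
    thus "f s \<le> T powr \<alpha> * \<bar>a s\<bar>" using s by (simp add: f_def ah_eq mult_right_mono)
  qed
  have "integral {0..T} (\<lambda>s. T powr \<alpha> * \<bar>a s\<bar>) = T powr \<alpha> * I1" by (simp add: I1_def)
  with e1 have "Ia \<le> T powr \<alpha> * I1 + I2" using Iasplit e2 by linarith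
  also have "\<dots> \<le> max 1 (T powr \<alpha>) * I1 + max 1 (T powr \<alpha>) * I2"
  proof -
    have "T powr \<alpha> * I1 \<le> max 1 (T powr \<alpha>) * I1" by (rule mult_right_mono[OF _ I1nn]) simp
    moreover have "1 * I2 \<le> max 1 (T powr \<alpha>) * I2" by (rule mult_right_mono[OF _ I2nn]) simp
    ultimately show ?thesis by simp
  qed
  finally have "Ia \<le> max 1 (T powr \<alpha>) * (I1 + I2)" by (simp add: algebra_simps)
  hence "Ia / Gamma (1 + \<alpha>) \<le> max 1 (T powr \<alpha>) * (I1 + I2) / Gamma (1 + \<alpha>)"
    using G1_pos by (simp add: divide_right_mono)
  thus ?thesis using kdef unfolding kk_def I1_def I2_def by simp
qed

definition Fop :: "real \<Rightarrow> real \<Rightarrow> (real \<Rightarrow> real) \<Rightarrow> real \<Rightarrow> real" where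
  "Fop c b y t = c + b * (max t 0) powr \<alpha> + integral {0..} (\<lambda>s. Kk \<alpha> t s * ah s * y s) / Gamma (1 + \<alpha>)"

lemma uy_cont: "continuous_on UNIV (\<lambda>s. om \<alpha> s * apply_bcontfun u s)"
  by (intro continuous_intros om_cont[OF \<alpha>0 \<alpha>1]) auto

lemma uy_bound: "\<bar>om \<alpha> s * apply_bcontfun u s\<bar> \<le> norm u * om \<alpha> s"
proof -
  have "\<bar>apply_bcontfun u s\<bar> \<le> norm u" using norm_bounded[of u s] by simp
  thus ?thesis using om_pos[OF \<alpha>0 \<alpha>1, of s] by (simp add: abs_mult mult.commute mult_left_mono)
qed

lemma Fop_cont:
  assumes yc: "continuous_on UNIV y" and yb: "\<And>s. 0 \<le> s \<Longrightarrow> \<bar>y s\<bar> \<le> B * om \<alpha> s"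
  shows "continuous_on UNIV (Fop c b y)"
proof -
  have "continuous_on UNIV (\<lambda>t. c + b * (max t 0) powr \<alpha> + integral {0..} (\<lambda>s. Kk \<alpha> t s * ah s * y s) / Gamma (1 + \<alpha>))"
    using G1_pos by (intro continuous_intros pc Ky_cont[OF yc yb]) auto
  thus ?thesis unfolding Fop_def[abs_def] by simp
qed

lemma Fop_diff:
  assumes c1: "continuous_on UNIV y1" and b1: "\<And>s. 0 \<le> s \<Longrightarrow> \<bar>y1 s\<bar> \<le> Ba * om \<alpha> s"
    and c2: "continuous_on UNIV y2" and b2: "\<And>s. 0 \<le> s \<Longrightarrow> \<bar>y2 s\<bar> \<le> Bb * om \<alpha> s"
    and d: "\<And>s. 0 \<le> s \<Longrightarrow> \<bar>y1 s - y2 s\<bar> \<le> D * om \<alpha> s"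
  shows "\<bar>Fop c b y1 t - Fop c b y2 t\<bar> \<le> D * om \<alpha> t * kk"
proof -
  have "Fop c b y1 t - Fop c b y2 t = (integral {0..} (\<lambda>s. Kk \<alpha> t s * ah s * y1 s) - integral {0..} (\<lambda>s. Kk \<alpha> t s * ah s * y2 s)) / Gamma (1 + \<alpha>)"
    by (simp add: Fop_def diff_divide_distrib)
  hence "\<bar>Fop c b y1 t - Fop c b y2 t\<bar> = \<bar>integral {0..} (\<lambda>s. Kk \<alpha> t s * ah s * y1 s) - integral {0..} (\<lambda>s. Kk \<alpha> t s * ah s * y2 s)\<bar> / Gamma (1 + \<alpha>)"
    using G1_pos by simp
  also have "\<dots> \<le> D * om \<alpha> t * Ia / Gamma (1 + \<alpha>)"
    using Ky_diff_bound[OF c1 b1 c2 b2 d, of t] G1_pos unfolding Ia_def by (simp add: divide_right_mono)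
  finally show ?thesis by (simp add: kk_def)
qed

lemma Fop_zero: "Fop c b (\<lambda>s. 0) t = c + b * (max t 0) powr \<alpha>"
  by (simp add: Fop_def)

definition Phi :: "real \<Rightarrow> real \<Rightarrow> (real \<Rightarrow>\<^sub>C real) \<Rightarrow> (real \<Rightarrow>\<^sub>C real)" where
  "Phi c b u = Bcontfun (\<lambda>t. Fop c b (\<lambda>s. om \<alpha> s * apply_bcontfun u s) t / om \<alpha> t)"

lemma Phi_in: "(\<lambda>t. Fop c b (\<lambda>s. om \<alpha> s * apply_bcontfun u s) t / om \<alpha> t) \<in> bcontfun"
proof (rule bcontfun_normI)
  have "continuous_on UNIV (\<lambda>t. Fop c b (\<lambda>s. om \<alpha> s * apply_bcontfun u s) t / om \<alpha> t)"
    by (intro continuous_intros Fop_cont[OF uy_cont, where B="norm u"] om_cont[OF \<alpha>0 \<alpha>1])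
       (use uy_bound omnz in auto)
  thus "continuous_on UNIV (\<lambda>t. Fop c b (\<lambda>s. om \<alpha> s * apply_bcontfun u s) t / om \<alpha> t)" .
  fix t
  have om1: "1 \<le> om \<alpha> t" by (rule om_pos[OF \<alpha>0 \<alpha>1])
  have d: "\<bar>Fop c b (\<lambda>s. om \<alpha> s * apply_bcontfun u s) t - Fop c b (\<lambda>s. 0) t\<bar> \<le> norm u * om \<alpha> t * kk"
    by (rule Fop_diff[OF uy_cont _ continuous_on_const, where Ba="norm u" and Bb=0]) (use uy_bound in auto)
  have pt: "(max t 0) powr \<alpha> \<le> om \<alpha> t" by (simp add: om_def[OF \<alpha>0 \<alpha>1])
  have "\<bar>Fop c b (\<lambda>s. 0) t\<bar> \<le> \<bar>c\<bar> + \<bar>b\<bar> * om \<alpha> t"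
  proof -
    have P0: "0 \<le> (max t 0) powr \<alpha>" by simp
    have "\<bar>b * (max t 0) powr \<alpha>\<bar> = \<bar>b\<bar> * (max t 0) powr \<alpha>" using P0 by (simp add: abs_mult)
    also have "\<dots> \<le> \<bar>b\<bar> * om \<alpha> t" by (rule mult_left_mono[OF pt]) simp
    finally have "\<bar>b * (max t 0) powr \<alpha>\<bar> \<le> \<bar>b\<bar> * om \<alpha> t" .
    moreover have "\<bar>c + b * (max t 0) powr \<alpha>\<bar> \<le> \<bar>c\<bar> + \<bar>b * (max t 0) powr \<alpha>\<bar>" by (rule abs_triangle_ineq)
    ultimately show ?thesis unfolding Fop_zero by linarith
  qed
  hence "\<bar>Fop c b (\<lambda>s. om \<alpha> s * apply_bcontfun u s) t\<bar> \<le> \<bar>c\<bar> + \<bar>b\<bar> * om \<alpha> t + norm u * om \<alpha> t * kk"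
    using d by linarith
  also have "\<dots> \<le> (\<bar>c\<bar> + \<bar>b\<bar> + norm u * kk) * om \<alpha> t"
  proof -
    have "\<bar>c\<bar> * 1 \<le> \<bar>c\<bar> * om \<alpha> t" by (rule mult_left_mono[OF om1]) simp
    moreover have "(\<bar>c\<bar> + \<bar>b\<bar> + norm u * kk) * om \<alpha> t = \<bar>c\<bar> * om \<alpha> t + \<bar>b\<bar> * om \<alpha> t + norm u * om \<alpha> t * kk"
      by (simp add: algebra_simps)
    ultimately show ?thesis by linarith
  qed
  finally have "\<bar>Fop c b (\<lambda>s. om \<alpha> s * apply_bcontfun u s) t\<bar> / om \<alpha> t \<le> \<bar>c\<bar> + \<bar>b\<bar> + norm u * kk"
    using om1 by (simp add: divide_le_eq)
  thus "norm (Fop c b (\<lambda>s. om \<alpha> s * apply_bcontfun u s) t / om \<alpha> t) \<le> \<bar>c\<bar> + \<bar>b\<bar> + norm u * kk"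
    using om1 by simp
qed

lemma Phi_apply: "apply_bcontfun (Phi c b u) t = Fop c b (\<lambda>s. om \<alpha> s * apply_bcontfun u s) t / om \<alpha> t"
  unfolding Phi_def using Phi_in by (simp add: Bcontfun_inverse)

lemma Phi_contr: "dist (Phi c b u) (Phi c b v) \<le> kk * dist u v"
proof (rule dist_bound)
  fix t
  have om1: "1 \<le> om \<alpha> t" by (rule om_pos[OF \<alpha>0 \<alpha>1])
  have d: "\<bar>om \<alpha> s * apply_bcontfun u s - om \<alpha> s * apply_bcontfun v s\<bar> \<le> dist u v * om \<alpha> s" for s
  proof -
    have "\<bar>apply_bcontfun u s - apply_bcontfun v s\<bar> \<le> dist u v" using dist_bounded[of u s v] by (simp add: dist_real_def)
    moreover have "om \<alpha> s * apply_bcontfun u s - om \<alpha> s * apply_bcontfun v s = om \<alpha> s * (apply_bcontfun u s - apply_bcontfun v s)"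
      by (simp add: algebra_simps)
    ultimately show ?thesis using om_pos[OF \<alpha>0 \<alpha>1, of s] by (simp add: abs_mult mult.commute mult_left_mono)
  qed
  have "\<bar>Fop c b (\<lambda>s. om \<alpha> s * apply_bcontfun u s) t - Fop c b (\<lambda>s. om \<alpha> s * apply_bcontfun v s) t\<bar> \<le> dist u v * om \<alpha> t * kk"
    by (rule Fop_diff[OF uy_cont _ uy_cont _ d]) (use uy_bound in auto)
  hence "\<bar>Fop c b (\<lambda>s. om \<alpha> s * apply_bcontfun u s) t - Fop c b (\<lambda>s. om \<alpha> s * apply_bcontfun v s) t\<bar> / om \<alpha> t \<le> kk * dist u v"
    using om1 by (simp add: divide_le_eq mult_ac)
  moreover have "\<bar>Fop c b (\<lambda>s. om \<alpha> s * apply_bcontfun u s) t / om \<alpha> t - Fop c b (\<lambda>s. om \<alpha> s * apply_bcontfun v s) t / om \<alpha> t\<bar>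
     = \<bar>Fop c b (\<lambda>s. om \<alpha> s * apply_bcontfun u s) t - Fop c b (\<lambda>s. om \<alpha> s * apply_bcontfun v s) t\<bar> / om \<alpha> t"
    using om1 by (simp add: diff_divide_distrib[symmetric] abs_divide)
  ultimately show "dist (apply_bcontfun (Phi c b u) t) (apply_bcontfun (Phi c b v) t) \<le> kk * dist u v"
    unfolding Phi_apply dist_real_def by simp
qed

lemma fixed_point: "\<exists>u. Phi c b u = u"
proof -
  have "\<exists>!u. Phi c b u = u"
    by (rule banach_fix_type[OF kk_nonneg]) (use kk_le k1 Phi_contr in auto)
  thus ?thesis by blast
qed

end



locale fp = setting +
  fixes c b :: real and u :: "real \<Rightarrow>\<^sub>C real"
  assumes fixu: "Phi c b u = u"
begin

definition xs :: "real \<Rightarrow> real" where "xs t = om \<alpha> t * apply_bcontfun u t"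
definition hh :: "real \<Rightarrow> real" where "hh s = ah s * xs s"
definition A :: real where "A = integral {0..} hh"
definition D :: real where "D = \<alpha> * (b + A / Gamma (1 + \<alpha>))"
definition yv :: "real \<Rightarrow> real" where "yv t = D * t powr (\<alpha>-1) - Jf \<alpha> hh t / Gamma \<alpha>"

lemma x_cont: "continuous_on UNIV xs"
  unfolding xs_def[abs_def] by (rule uy_cont)

lemma x_bound: "\<bar>xs s\<bar> \<le> norm u * om \<alpha> s"
  unfolding xs_def by (rule uy_bound)

lemma x_eq: "xs t = Fop c b xs t"
proof -
  have "apply_bcontfun u t = apply_bcontfun (Phi c b u) t" using fixu by simp
  also have "\<dots> = Fop c b xs t / om \<alpha> t" unfolding Phi_apply xs_def[abs_def] by simp
  finally show ?thesis using omnz[of t] by (simp add: xs_def field_simps)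
qed

lemma h_cont: "continuous_on UNIV hh"
  unfolding hh_def[abs_def] by (intro continuous_intros ah_cont x_cont)

lemma h_meas[measurable]: "hh \<in> borel_measurable borel"
  by (rule borel_measurable_continuous_onI[OF h_cont])

lemma om_rho: "0 \<le> s \<Longrightarrow> om \<alpha> s * \<bar>ah s\<bar> \<le> rho s"
proof -
  assume s: "0 \<le> s"
  have "om \<alpha> s * 1 \<le> om \<alpha> s * (1 + s)" using s om_pos[OF \<alpha>0 \<alpha>1, of s] by (intro mult_left_mono) auto
  hence "om \<alpha> s \<le> (1 + s powr \<alpha>) * (1 + s)" using s by (simp add: om_def[OF \<alpha>0 \<alpha>1])
  thus ?thesis unfolding rho_def by (rule mult_right_mono) simp
qed

lemma h_bound: "0 \<le> s \<Longrightarrow> \<bar>hh s\<bar> \<le> norm u * rho s"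
proof -
  assume s: "0 \<le> s"
  have "\<bar>hh s\<bar> = \<bar>ah s\<bar> * \<bar>xs s\<bar>" by (simp add: hh_def abs_mult)
  also have "\<dots> \<le> \<bar>ah s\<bar> * (norm u * om \<alpha> s)" by (rule mult_left_mono[OF x_bound]) simp
  also have "\<dots> = norm u * (om \<alpha> s * \<bar>ah s\<bar>)" by (simp add: algebra_simps)
  also have "\<dots> \<le> norm u * rho s" by (rule mult_left_mono[OF om_rho[OF s]]) simp
  finally show ?thesis .
qed

lemma h_int: "hh integrable_on {0..}"
  by (rule dom_int(2)[of _ "norm u"]) (use h_bound in auto)

lemma sh_int: "(\<lambda>s. s * \<bar>hh s\<bar>) integrable_on {0..}"
proof (rule dom_int(2)[of _ "norm u"])
  show "(\<lambda>s. s * \<bar>hh s\<bar>) \<in> borel_measurable borel" by measurable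
  fix s :: real assume s: "0 \<le> s"
  have "\<bar>hh s\<bar> = \<bar>ah s\<bar> * \<bar>xs s\<bar>" by (simp add: hh_def abs_mult)
  also have "\<dots> \<le> \<bar>ah s\<bar> * (norm u * om \<alpha> s)" by (rule mult_left_mono[OF x_bound]) simp
  finally have hb: "\<bar>hh s\<bar> \<le> norm u * (om \<alpha> s * \<bar>ah s\<bar>)" by (simp add: algebra_simps)
  have "s * \<bar>hh s\<bar> \<le> s * (norm u * (om \<alpha> s * \<bar>ah s\<bar>))" by (rule mult_left_mono[OF hb s])
  also have "\<dots> = norm u * (s * om \<alpha> s * \<bar>ah s\<bar>)" by (simp add: algebra_simps)
  also have "\<dots> \<le> norm u * rho s"
  proof (rule mult_left_mono)
    have "s * om \<alpha> s \<le> (1 + s powr \<alpha>) * (1 + s)" using s by (simp add: om_def[OF \<alpha>0 \<alpha>1] algebra_simps)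
    thus "s * om \<alpha> s * \<bar>ah s\<bar> \<le> rho s" unfolding rho_def by (rule mult_right_mono) simp
  qed simp
  finally show "\<bar>s * \<bar>hh s\<bar>\<bar> \<le> norm u * rho s" using s by simp
qed

lemma split_int:
  assumes t: "0 \<le> t"
  shows "integral {0..} (\<lambda>s. Kk \<alpha> t s * ah s * xs s) = t powr \<alpha> * A - integral {0..t} (\<lambda>s. (t-s) powr \<alpha> * hh s)"
proof -
  have i1: "(\<lambda>s. Kk \<alpha> t s * ah s * xs s) integrable_on {0..}"
    by (rule Ky_int(1)[OF x_cont, where B="norm u"]) (simp add: x_bound)
  have i2: "(\<lambda>s. t powr \<alpha> * hh s) integrable_on {0..}" by (rule integrable_on_mult_right[OF h_int])
  have eqK: "Kk \<alpha> t s * ah s * xs s = t powr \<alpha> * hh s - (max (t-s) 0) powr \<alpha> * hh s" for s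
    using t by (simp add: Kk_def[OF \<alpha>0 \<alpha>1] hh_def algebra_simps)
  have i3: "(\<lambda>s. (max (t-s) 0) powr \<alpha> * hh s) integrable_on {0..}"
  proof -
    have "(\<lambda>s. t powr \<alpha> * hh s - Kk \<alpha> t s * ah s * xs s) integrable_on {0..}" by (rule integrable_diff[OF i2 i1])
    thus ?thesis by (simp add: eqK)
  qed
  have "integral {0..} (\<lambda>s. Kk \<alpha> t s * ah s * xs s) = integral {0..} (\<lambda>s. t powr \<alpha> * hh s - (max (t-s) 0) powr \<alpha> * hh s)"
    by (simp add: eqK)
  also have "\<dots> = t powr \<alpha> * A - integral {0..} (\<lambda>s. (max (t-s) 0) powr \<alpha> * hh s)"
    by (simp add: integral_diff[OF i2 i3] A_def)
  also have "integral {0..} (\<lambda>s. (max (t-s) 0) powr \<alpha> * hh s) = integral {0..t} (\<lambda>s. (t-s) powr \<alpha> * hh s)"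
  proof -
    have c1: "continuous_on {0..t} (\<lambda>s. (t-s) powr \<alpha> * hh s)"
      by (intro continuous_on_mult continuous_on_powr' continuous_on_subset[OF h_cont] continuous_intros) (auto simp: \<alpha>0)
    have ha: "((\<lambda>s. (max (t-s) 0) powr \<alpha> * hh s) has_integral integral {0..t} (\<lambda>s. (t-s) powr \<alpha> * hh s)) {0..t}"
    proof -
      have "((\<lambda>s. (t-s) powr \<alpha> * hh s) has_integral integral {0..t} (\<lambda>s. (t-s) powr \<alpha> * hh s)) {0..t}"
        by (rule integrable_integral[OF integrable_continuous_interval[OF c1]])
      thus ?thesis by (rule has_integral_eq[rotated]) auto
    qed
    have hb: "((\<lambda>s. (max (t-s) 0) powr \<alpha> * hh s) has_integral 0) {t..}"
    proof -
      have "((\<lambda>s. 0::real) has_integral 0) {t..}" by simp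
      thus ?thesis by (rule has_integral_eq[rotated]) auto
    qed
    have "((\<lambda>s. (max (t-s) 0) powr \<alpha> * hh s) has_integral integral {0..t} (\<lambda>s. (t-s) powr \<alpha> * hh s) + 0) ({0..t} \<union> {t..})"
    proof (rule has_integral_Un[OF ha hb])
      have "{0..t} \<inter> {t..} = {t}" using t by auto
      thus "negligible ({0..t} \<inter> {t..})" by simp
    qed
    moreover have "{0..t} \<union> {t..} = ({0..} :: real set)" using t by auto
    ultimately show ?thesis by (simp add: integral_unique)
  qed
  finally show ?thesis .
qed

lemma x_formula:
  assumes t: "0 \<le> t"
  shows "xs t = c + b * t powr \<alpha> + (t powr \<alpha> * A - integral {0..t} (\<lambda>s. (t-s) powr \<alpha> * hh s)) / Gamma (1 + \<alpha>)"
  using x_eq[of t] split_int[OF t] t by (simp add: Fop_def)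

lemma Gamma_rel: "\<alpha> / Gamma (1 + \<alpha>) = 1 / Gamma \<alpha>"
proof -
  have "Gamma (\<alpha> + 1) = \<alpha> * Gamma \<alpha>" by (rule Gamma_plus1[OF not_nonpos_Int_pos[OF \<alpha>0]])
  moreover have "Gamma \<alpha> > 0" by (rule Gamma_real_pos[OF \<alpha>0])
  ultimately show ?thesis using \<alpha>0 by (simp add: add.commute field_simps)
qed

lemma x_deriv:
  assumes t: "0 < t"
  shows "(xs has_real_derivative yv t) (at t)"
proof -
  have P: "((\<lambda>\<tau>. integral {0..\<tau>} (\<lambda>s. (\<tau>-s) powr \<alpha> * hh s)) has_real_derivative \<alpha> * Jf \<alpha> hh t) (at t)"
    by (rule P_deriv[OF \<alpha>0 \<alpha>1 h_cont t])
  have pw: "((\<lambda>\<tau>. \<tau> powr \<alpha>) has_real_derivative \<alpha> * t powr (\<alpha>-1)) (at t)"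
    by (rule has_real_derivative_powr[OF t])
  have "((\<lambda>\<tau>. c + b * \<tau> powr \<alpha> + (\<tau> powr \<alpha> * A - integral {0..\<tau>} (\<lambda>s. (\<tau>-s) powr \<alpha> * hh s)) / Gamma (1 + \<alpha>))
      has_real_derivative (0 + b * (\<alpha> * t powr (\<alpha>-1)) + (\<alpha> * t powr (\<alpha>-1) * A - \<alpha> * Jf \<alpha> hh t) / Gamma (1 + \<alpha>))) (at t)"
  proof -
    have d1: "((\<lambda>\<tau>. b * \<tau> powr \<alpha>) has_real_derivative b * (\<alpha> * t powr (\<alpha>-1))) (at t)" by (rule DERIV_cmult[OF pw])
    have d2: "((\<lambda>\<tau>. \<tau> powr \<alpha> * A) has_real_derivative (\<alpha> * t powr (\<alpha>-1)) * A) (at t)" by (rule DERIV_cmult_right[OF pw])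
    show ?thesis
      by (rule Deriv.field_differentiable_add[OF Deriv.field_differentiable_add[OF DERIV_const d1] DERIV_cdivide[OF Deriv.field_differentiable_diff[OF d2 P]]])
  qed
  moreover have "0 + b * (\<alpha> * t powr (\<alpha>-1)) + (\<alpha> * t powr (\<alpha>-1) * A - \<alpha> * Jf \<alpha> hh t) / Gamma (1 + \<alpha>) = yv t"
  proof -
    have "\<alpha> * Jf \<alpha> hh t / Gamma (1 + \<alpha>) = Jf \<alpha> hh t / Gamma \<alpha>"
      using Gamma_rel by (metis (no_types, lifting) times_divide_eq_left times_divide_eq_right mult.commute mult_1)
    thus ?thesis unfolding yv_def D_def by (simp add: field_simps diff_divide_distrib)
  qed
  ultimately have "((\<lambda>\<tau>. c + b * \<tau> powr \<alpha> + (\<tau> powr \<alpha> * A - integral {0..\<tau>} (\<lambda>s. (\<tau>-s) powr \<alpha> * hh s)) / Gamma (1 + \<alpha>))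
      has_real_derivative yv t) (at t)" by simp
  thus ?thesis
    by (rule has_field_derivative_transform_within_open[of _ _ _ "{0<..}"]) (use t x_formula in auto)
qed

lemma deriv_x: "0 < t \<Longrightarrow> deriv xs t = yv t"
  by (rule DERIV_imp_deriv[OF x_deriv])

end



context fp
begin

lemma G1m_pos: "0 < Gamma (1 - \<alpha>)"
proof -
  have "(0::real) < 1 - \<alpha>" using \<alpha>1 by simp
  from Gamma_real_pos[OF this] show ?thesis .
qed

definition E :: real where "E = D * Gamma \<alpha> * Gamma (1 - \<alpha>)"

lemma RL_int:
  assumes \<tau>: "0 < \<tau>"
  shows "((\<lambda>s. deriv xs s / (\<tau>-s) powr \<alpha>) has_integral (E - Gamma (1-\<alpha>) * integral {0..\<tau>} hh)) {0..\<tau>}"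
proof -
  have h: "((\<lambda>s. (D * s powr (\<alpha>-1) - Jf \<alpha> hh s / Gamma \<alpha>) / (\<tau>-s) powr \<alpha>) has_integral
          (D * Gamma \<alpha> * Gamma (1-\<alpha>) - Gamma (1-\<alpha>) * integral {0..\<tau>} hh)) {0..\<tau>}"
    by (rule RL_has_integral[OF \<alpha>0 \<alpha>1 h_cont \<tau>])
  have "((\<lambda>s. yv s / (\<tau>-s) powr \<alpha>) has_integral (E - Gamma (1-\<alpha>) * integral {0..\<tau>} hh)) {0..\<tau>}"
    using h unfolding yv_def E_def .
  moreover have "((\<lambda>s. deriv xs s / (\<tau>-s) powr \<alpha>) has_integral (E - Gamma (1-\<alpha>) * integral {0..\<tau>} hh)) {0..\<tau>}
    \<longleftrightarrow> ((\<lambda>s. yv s / (\<tau>-s) powr \<alpha>) has_integral (E - Gamma (1-\<alpha>) * integral {0..\<tau>} hh)) {0..\<tau>}"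
    by (rule has_integral_spike_finite_eq[of "{0}"]) (auto simp: deriv_x)
  ultimately show ?thesis by simp
qed

lemma RL_part: "0 < \<tau> \<Longrightarrow> RL_integral_part \<alpha> (deriv xs) \<tau> = E - Gamma (1-\<alpha>) * integral {0..\<tau>} hh"
  unfolding RL_integral_part_def using RL_int by (rule integral_unique)

lemma RL_deriv_at:
  assumes t: "0 < t"
  shows "(RL_integral_part \<alpha> (deriv xs) has_real_derivative (- Gamma (1-\<alpha>) * hh t)) (at t)"
proof -
  have "((\<lambda>x. integral {0..x} hh) has_real_derivative hh t) (at t within {0..t+1})"
    by (rule integral_has_real_derivative) (use t h_cont in \<open>auto intro: continuous_on_subset\<close>)
  hence i: "((\<lambda>x. integral {0..x} hh) has_real_derivative hh t) (at t)"
    using at_within_Icc_at[of 0 t "t+1"] t by simp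
  have "((\<lambda>x. E - Gamma (1-\<alpha>) * integral {0..x} hh) has_real_derivative 0 - Gamma (1-\<alpha>) * hh t) (at t)"
    by (rule Deriv.field_differentiable_diff[OF DERIV_const DERIV_cmult[OF i]])
  hence "((\<lambda>x. E - Gamma (1-\<alpha>) * integral {0..x} hh) has_real_derivative - Gamma (1-\<alpha>) * hh t) (at t)"
    by simp
  thus ?thesis
    by (rule has_field_derivative_transform_within_open[of _ _ _ "{0<..}"]) (use t RL_part in auto)
qed

lemma RL_deriv_val: "0 < t \<Longrightarrow> RL_deriv \<alpha> (deriv xs) t = - hh t"
  unfolding RL_deriv_def using DERIV_imp_deriv[OF RL_deriv_at] G1m_pos by simp

lemma yv_cont: "continuous_on {0<..} yv"
proof -
  have p: "continuous_on {0<..} (\<lambda>t::real. t powr (\<alpha>-1))"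
    by (rule continuous_on_powr') (auto intro: continuous_intros)
  have j: "continuous_on {0<..} (Jf \<alpha> hh)"
    by (rule continuous_on_subset[OF J_cont[OF \<alpha>0 h_cont]]) auto
  show ?thesis unfolding yv_def[abs_def] by (intro continuous_intros p j) (use Gamma_real_pos[OF \<alpha>0] in auto)
qed

lemma admissible: "RL_admissible \<alpha> (deriv xs)"
  unfolding RL_admissible_def
proof (intro conjI allI impI)
  show "continuous_on {0<..} (deriv xs)"
    by (rule continuous_on_eq[OF yv_cont]) (auto simp: deriv_x)
  show "\<exists>L. ((\<lambda>t. t powr (1 - \<alpha>) * deriv xs t) \<longlongrightarrow> L) (at_right 0)"
  proof
    obtain M where M: "\<And>s. s \<in> {0..1} \<Longrightarrow> \<bar>hh s\<bar> \<le> M" using cont_bounded_on[OF h_cont] by blast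
    have ev: "\<forall>\<^sub>F t in at_right 0. 0 < t \<and> t < (1::real)"
      unfolding eventually_at_right_field by (intro exI[of _ 1]) auto
    have lim0: "((\<lambda>t. t powr (1-\<alpha>) * Jf \<alpha> hh t) \<longlongrightarrow> 0) (at_right 0)"
    proof (rule Lim_null_comparison)
      show "\<forall>\<^sub>F t in at_right 0. norm (t powr (1-\<alpha>) * Jf \<alpha> hh t) \<le> M / \<alpha> * t"
        using ev
      proof eventually_elim
        case (elim t)
        hence t: "0 < t" "t < 1" by auto
        have Jb: "\<bar>Jf \<alpha> hh t\<bar> \<le> M * (t powr \<alpha> / \<alpha>)"
          by (rule J_bound[OF \<alpha>0 _ h_cont]) (use t M in auto)
        have "norm (t powr (1-\<alpha>) * Jf \<alpha> hh t) = t powr (1-\<alpha>) * \<bar>Jf \<alpha> hh t\<bar>" by (simp add: abs_mult)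
        also have "\<dots> \<le> t powr (1-\<alpha>) * (M * (t powr \<alpha> / \<alpha>))" by (rule mult_left_mono[OF Jb]) simp
        also have "\<dots> = M / \<alpha> * (t powr (1-\<alpha>) * t powr \<alpha>)" by (simp add: field_simps)
        also have "t powr (1-\<alpha>) * t powr \<alpha> = t" using t powr_add[of t "1-\<alpha>" \<alpha>] by simp
        finally show ?case .
      qed
      have "((\<lambda>t. M / \<alpha> * t) \<longlongrightarrow> M / \<alpha> * 0) (at_right 0)"
        by (intro tendsto_intros)
      thus "((\<lambda>t. M / \<alpha> * t) \<longlongrightarrow> 0) (at_right 0)" by simp
    qed
    have "((\<lambda>t. D - t powr (1-\<alpha>) * Jf \<alpha> hh t / Gamma \<alpha>) \<longlongrightarrow> D - 0 / Gamma \<alpha>) (at_right 0)"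
      by (intro tendsto_intros lim0) (use Gamma_real_pos[OF \<alpha>0] in auto)
    hence l: "((\<lambda>t. D - t powr (1-\<alpha>) * Jf \<alpha> hh t / Gamma \<alpha>) \<longlongrightarrow> D) (at_right 0)" by simp
    show "((\<lambda>t. t powr (1 - \<alpha>) * deriv xs t) \<longlongrightarrow> D) (at_right 0)"
    proof (rule Lim_transform_eventually[OF l])
      show "\<forall>\<^sub>F t in at_right 0. D - t powr (1-\<alpha>) * Jf \<alpha> hh t / Gamma \<alpha> = t powr (1 - \<alpha>) * deriv xs t"
        using ev
      proof eventually_elim
        case (elim t)
        hence t: "0 < t" by auto
        have "t powr (1-\<alpha>) * t powr (\<alpha>-1) = 1" using t powr_add[of t "1-\<alpha>" "\<alpha>-1"] by simp
        thus ?case using t by (simp add: deriv_x yv_def algebra_simps)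
      qed
    qed
  qed
  fix t :: real assume t: "0 < t"
  show "(\<lambda>s. deriv xs s / (t - s) powr \<alpha>) integrable_on {0..t}"
    using RL_int[OF t] by (auto simp: integrable_on_def)
  show "RL_integral_part \<alpha> (deriv xs) differentiable (at t)"
    using has_field_derivative_imp_has_derivative[OF RL_deriv_at[OF t]] unfolding differentiable_def by blast
qed

lemma solution: "is_solution \<alpha> a xs"
  unfolding is_solution_def
proof (intro conjI allI impI admissible)
  show "continuous_on {0..} xs" by (rule continuous_on_subset[OF x_cont]) auto
  fix t :: real assume t: "0 < t"
  show "xs differentiable (at t)"
    using has_field_derivative_imp_has_derivative[OF x_deriv[OF t]] unfolding differentiable_def by blast
  show "RL_deriv \<alpha> (deriv xs) t + a t * xs t = 0"
    using RL_deriv_val[OF t] t by (simp add: hh_def ah_eq)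
qed

definition Q :: real where "Q = integral {0..} (\<lambda>s. s * \<bar>hh s\<bar>)"

lemma R_bound:
  assumes t: "0 < t"
  shows "\<bar>xs t - c - b * t powr \<alpha>\<bar> \<le> Q / Gamma (1 + \<alpha>) * t powr (\<alpha>-1)"
proof -
  have i1: "(\<lambda>s. Kk \<alpha> t s * ah s * xs s) integrable_on {0..}"
    by (rule Ky_int(1)[OF x_cont, where B="norm u"]) (simp add: x_bound)
  have nb: "norm (integral {0..} (\<lambda>s. Kk \<alpha> t s * ah s * xs s)) \<le> integral {0..} (\<lambda>s. t powr (\<alpha>-1) * (s * \<bar>hh s\<bar>))"
  proof (rule integral_norm_bound_integral[OF i1])
    show "(\<lambda>s. t powr (\<alpha>-1) * (s * \<bar>hh s\<bar>)) integrable_on {0..}" by (rule integrable_on_mult_right[OF sh_int])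
    fix s :: real assume "s \<in> {0..}"
    hence s: "0 \<le> s" by simp
    have K0: "0 \<le> Kk \<alpha> t s" by (rule Kk_nonneg[OF \<alpha>0 \<alpha>1 s])
    have "norm (Kk \<alpha> t s * ah s * xs s) = Kk \<alpha> t s * \<bar>hh s\<bar>" using K0 by (simp add: hh_def abs_mult mult.assoc)
    also have "\<dots> \<le> s * t powr (\<alpha>-1) * \<bar>hh s\<bar>" by (rule mult_right_mono[OF Kk_le_lin[OF \<alpha>0 \<alpha>1 t s]]) simp
    finally show "norm (Kk \<alpha> t s * ah s * xs s) \<le> t powr (\<alpha>-1) * (s * \<bar>hh s\<bar>)" by (simp add: algebra_simps)
  qed
  have "xs t - c - b * t powr \<alpha> = integral {0..} (\<lambda>s. Kk \<alpha> t s * ah s * xs s) / Gamma (1 + \<alpha>)"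
    using x_eq[of t] t by (simp add: Fop_def)
  hence "\<bar>xs t - c - b * t powr \<alpha>\<bar> = norm (integral {0..} (\<lambda>s. Kk \<alpha> t s * ah s * xs s)) / Gamma (1 + \<alpha>)"
    using G1_pos by simp
  also have "\<dots> \<le> (t powr (\<alpha>-1) * Q) / Gamma (1 + \<alpha>)"
    using nb G1_pos unfolding Q_def by (intro divide_right_mono) auto
  finally show ?thesis by (simp add: mult.commute)
qed

lemma asym:
  "(\<lambda>t. xs t - c - b * t powr \<alpha>) \<in> O[at_top](\<lambda>t. t powr (\<alpha> - 1))"
  "((\<lambda>t. xs t - c - b * t powr \<alpha>) \<longlongrightarrow> 0) at_top"
proof -
  have ev: "\<forall>\<^sub>F t in at_top. norm (xs t - c - b * t powr \<alpha>) \<le> Q / Gamma (1 + \<alpha>) * t powr (\<alpha>-1)"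
    using eventually_gt_at_top[of "0::real"] by eventually_elim (use R_bound in simp)
  show "(\<lambda>t. xs t - c - b * t powr \<alpha>) \<in> O[at_top](\<lambda>t. t powr (\<alpha> - 1))"
    by (rule bigoI[where c="Q / Gamma (1 + \<alpha>)"]) (use ev in \<open>simp\<close>)
  have "((\<lambda>t. t powr (\<alpha>-1)) \<longlongrightarrow> 0) at_top"
    by (rule tendsto_neg_powr) (use \<alpha>1 in \<open>auto intro: filterlim_ident\<close>)
  hence "((\<lambda>t. Q / Gamma (1 + \<alpha>) * t powr (\<alpha>-1)) \<longlongrightarrow> Q / Gamma (1 + \<alpha>) * 0) at_top"
    by (intro tendsto_intros)
  hence "((\<lambda>t. Q / Gamma (1 + \<alpha>) * t powr (\<alpha>-1)) \<longlongrightarrow> 0) at_top" by simp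
  thus "((\<lambda>t. xs t - c - b * t powr \<alpha>) \<longlongrightarrow> 0) at_top"
    by (rule Lim_null_comparison[OF ev])
qed

end

theorem theorem1:
  fixes \<alpha> T k c b :: real and a :: "real \<Rightarrow> real"
  assumes "0 < \<alpha>" "\<alpha> < 1"
    and "continuous_on {0..} a"
    and "0 < T"
    and "(\<lambda>s. s powr (1 + \<alpha>) * \<bar>a s\<bar>) integrable_on {T..}"
    and "max 1 (T powr \<alpha>) / Gamma (1 + \<alpha>) *
           (integral {0..T} (\<lambda>s. \<bar>a s\<bar>) + integral {T..} (\<lambda>s. s powr \<alpha> * \<bar>a s\<bar>)) = k"
    and "k < 1"
    and "c\<^sup>2 + b\<^sup>2 > 0"
  shows "\<exists>x. is_solution \<alpha> a x \<and>
           (\<lambda>t. x t - c - b * t powr \<alpha>) \<in> O[at_top](\<lambda>t. t powr (\<alpha> - 1)) \<and>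
           ((\<lambda>t. x t - c - b * t powr \<alpha>) \<longlongrightarrow> 0) at_top"
proof -
  interpret S: setting \<alpha> T k a by unfold_locales (use assms in auto)
  obtain u where u: "S.Phi c b u = u" using S.fixed_point by blast
  interpret F: fp \<alpha> T k a c b u by unfold_locales (rule u)
  show ?thesis using F.solution F.asym by blast
qed


end
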